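(* Let $H$ be a real Hilbert space, let $m\ge1$, let $\mathcal{A}_i:H\to2^H$ ($i=1,\dots,m$) be maximally monotone, let $\mathcal{B}:H\to H$ be monotone and $L$-Lipschitz ($L>0$), let $\mathcal{C}:H\to H$ be $\beta$-cocoercive ($\beta>0$), and assume that the set of $\mathbf{x}\in H$ with $0\in\sum_{i=1}^m\mathcal{A}_i\mathbf{x}+\mathcal{B}\mathbf{x}+\mathcal{C}\mathbf{x}$ is nonempty. Let $\omega_1,\dots,\omega_m\in(0,1]$ with $\sum_i\omega_i=1$, let $\lambda>0$ and $\gamma\in\left(0,\frac{\lambda\beta}{\beta+\lambda(2\beta L+1)}\right)$. Let $\mathbf{x}_0,\mathbf{x}_{-1}\in H$, $(\mathbf{u}_{i,0})_{1\le i\le m}\in H^m$ and iterate, for $n\ge0$, $$\mathbf{x}_{n+1}=\sum_{j=1}^m\omega_j\big(\mathbf{x}_n-\gamma\mathbf{u}_{j,n}-\gamma(2\mathcal{B}\mathbf{x}_n-\mathcal{B}\mathbf{x}_{n-1})-\gamma\mathcal{C}\mathbf{x}_n\big),$$ and for $i=1,\dots,m$: $$\mathbf{y}_{i,n+1}=J_{\frac{\lambda}{\omega_i}\mathcal{A}_i}(2\mathbf{x}_{n+1}-\mathbf{x}_n+\lambda\mathbf{u}_{i,n}),\qquad \mathbf{u}_{i,n+1}=\mathbf{u}_{i,n}+\tfrac1\lambda(2\mathbf{x}_{n+1}-\mathbf{x}_n-\mathbf{y}_{i,n+1}).$$ Then $\{\mathbf{x}_n\}$ converges weakly to a point $\mathbf{x}$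 satisfying $0\in\sum_{i=1}^m\mathcal{A}_i\mathbf{x}+\mathcal{B}\mathbf{x}+\mathcal{C}\mathbf{x}$.
   Context: $J_{T}=(\mathrm{Id}+T)^{-1}$ is the resolvent of a maximally monotone operator $T$. $\beta$-cocoercive means $\langle x-y,\mathcal{C}x-\mathcal{C}y\rangle\ge\beta\|\mathcal{C}x-\mathcal{C}y\|^2$ for all $x,y$. *)

theory Defs
  imports "HOL-Analysis.Analysis"
begin

text \<open>Real Hilbert space: a type of class real_inner and complete_space.
Set-valued operators are functions 'a => 'a set.\<close>

definition monotone_op :: "('a::real_inner \<Rightarrow> 'a set) \<Rightarrow> bool" where
  "monotone_op A \<longleftrightarrow> (\<forall>x y u v. u \<in> A x \<longrightarrow> v \<in> A y \<longrightarrow> inner (x - y) (u - v) \<ge> 0)"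

definition maximally_monotone :: "('a::real_inner \<Rightarrow> 'a set) \<Rightarrow> bool" where
  "maximally_monotone A \<longleftrightarrow> monotone_op A \<and>
     (\<forall>B. monotone_op B \<and> (\<forall>x. A x \<subseteq> B x) \<longrightarrow> B = A)"

definition monotone_single :: "('a::real_inner \<Rightarrow> 'a) \<Rightarrow> bool" where
  "monotone_single B \<longleftrightarrow> (\<forall>x y. inner (x - y) (B x - B y) \<ge> 0)"

definition lipschitz_op :: "real \<Rightarrow> ('a::real_normed_vector \<Rightarrow> 'a) \<Rightarrow> bool" where
  "lipschitz_op L B \<longleftrightarrow> (\<forall>x y. norm (B x - B y) \<le> L * norm (x - y))"

definition cocoercive :: "real \<Rightarrow> ('a::real_inner \<Rightarrow> 'a) \<Rightarrow> bool" where
  "cocoercive \<beta> C \<longleftrightarrow> (\<forall>x y. inner (x - y) (C x - C y) \<ge> \<beta> * (norm (C x - C y))\<^sup>2)"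

definition scale_op :: "real \<Rightarrow> ('a::real_vector \<Rightarrow> 'a set) \<Rightarrow> ('a \<Rightarrow> 'a set)" where
  "scale_op c A = (\<lambda>x. (\<lambda>v. c *\<^sub>R v) ` A x)"

text \<open>Resolvent J_T = (Id + T)^{-1}: J_T z is the (unique, for maximally monotone T)
  point y with z \<in> y + T y.\<close>
definition resolvent :: "('a::real_vector \<Rightarrow> 'a set) \<Rightarrow> 'a \<Rightarrow> 'a" where
  "resolvent T z = (THE y. z - y \<in> T y)"

definition weakly_converges :: "(nat \<Rightarrow> 'a::real_inner) \<Rightarrow> 'a \<Rightarrow> bool" where
  "weakly_converges s l \<longleftrightarrow> (\<forall>w. (\<lambda>n. inner (s n) w) \<longlonglongrightarrow> inner l w)"

definition is_zero_of :: "nat \<Rightarrow> (nat \<Rightarrow> 'a::real_vector \<Rightarrow> 'a set) \<Rightarrow> ('a \<Rightarrow> 'a) \<Rightarrow> ('a \<Rightarrow> 'a) \<Rightarrow> 'a \<Rightarrow> bool" where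
  "is_zero_of m A B C x \<longleftrightarrow>
     (\<exists>a. (\<forall>i\<in>{1..m}. a i \<in> A i x) \<and> (\<Sum>i=1..m. a i) + B x + C x = 0)"

end

theory Submission
  imports Defs "HOL-Library.Diagonal_Subsequence"
begin

lemma mono_sum_ineq:
  fixes a b :: "'i \<Rightarrow> 'a::real_inner"
  assumes "finite S" "\<forall>p\<in>S. 0 \<le> u p" "sum u S = 1"
    and mono: "\<forall>p\<in>S. \<forall>q\<in>S. inner (a p - a q) (b p - b q) \<ge> 0"
  shows "(\<Sum>p\<in>S. u p * inner (a p) (b p)) + (norm (\<Sum>p\<in>S. u p *\<^sub>R (b p - a p)))\<^sup>2 / 4 \<ge> 0"
proof -
  define A where "A = (\<Sum>p\<in>S. u p *\<^sub>R a p)"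
  define Bb where "Bb = (\<Sum>p\<in>S. u p *\<^sub>R b p)"
  have T0: "(\<Sum>p\<in>S. \<Sum>q\<in>S. u p * u q * inner (a p - a q) (b p - b q)) \<ge> 0"
    using assms by (intro sum_nonneg) (simp add: mult_nonneg_nonneg)
  have e1: "(\<Sum>p\<in>S. \<Sum>q\<in>S. u p * u q * inner (a p) (b p)) = (\<Sum>p\<in>S. u p * inner (a p) (b p))"
    by (simp add: sum_distrib_right[symmetric] sum_distrib_left[symmetric] assms(3) mult.commute mult.left_commute mult.assoc)
  have e2: "(\<Sum>p\<in>S. \<Sum>q\<in>S. u p * u q * inner (a q) (b q)) = (\<Sum>p\<in>S. u p * inner (a p) (b p))"
    by (simp add: sum_distrib_left[symmetric] sum_distrib_right[symmetric] assms(3) mult.assoc)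
  have e3: "(\<Sum>p\<in>S. \<Sum>q\<in>S. u p * u q * inner (a p) (b q)) = inner A Bb"
    apply (simp add: A_def Bb_def inner_sum_left inner_sum_right sum_distrib_left mult.assoc)
    apply (subst sum.swap) apply (simp add: mult.commute mult.left_commute inner_commute)
    done
  have e4: "(\<Sum>p\<in>S. \<Sum>q\<in>S. u p * u q * inner (a q) (b p)) = inner A Bb"
    apply (simp add: A_def Bb_def inner_sum_left inner_sum_right sum_distrib_left mult.assoc)
    done
  have "(\<Sum>p\<in>S. \<Sum>q\<in>S. u p * u q * inner (a p - a q) (b p - b q))
      = (\<Sum>p\<in>S. \<Sum>q\<in>S. u p * u q * inner (a p) (b p)) - (\<Sum>p\<in>S. \<Sum>q\<in>S. u p * u q * inner (a p) (b q))
        - (\<Sum>p\<in>S. \<Sum>q\<in>S. u p * u q * inner (a q) (b p)) + (\<Sum>p\<in>S. \<Sum>q\<in>S. u p * u q * inner (a q) (b q))"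
    by (simp add: inner_diff_left inner_diff_right algebra_simps sum_subtractf sum.distrib)
  hence T1: "(\<Sum>p\<in>S. u p * inner (a p) (b p)) - inner A Bb \<ge> 0"
    using T0 e1 e2 e3 e4 by linarith
  have sb: "(\<Sum>p\<in>S. u p *\<^sub>R (b p - a p)) = Bb - A"
    by (simp add: A_def Bb_def scaleR_diff_right sum_subtractf)
  have "inner A Bb + (norm (Bb - A))\<^sup>2 / 4 = (norm (A + Bb))\<^sup>2 / 4"
    by (simp add: power2_norm_eq_inner inner_diff_left inner_diff_right inner_add_left inner_add_right inner_commute algebra_simps) (simp add: field_simps)
  moreover have "(norm (A + Bb))\<^sup>2 / 4 \<ge> 0" by simp
  ultimately show ?thesis unfolding sb using T1 by linarith
qed

lemma minty_point:
  fixes T :: "'a::{real_inner,complete_space} \<Rightarrow> 'a set" and z :: 'a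
  assumes mono: "monotone_op T"
  shows "\<exists>x. \<forall>a b. b \<in> T a \<longrightarrow> inner (x + b - z) (x - a) \<le> 0"
proof -
  define G where "G = {(a,b). b \<in> T a}"
  define f where "f = (\<lambda>(a,b). (b - z - a, inner a (b - z)))"
  define P where "P = f ` G"
  define K where "K = convex hull P"
  define h where "h = (\<lambda>k::'a\<times>real. - (norm (fst k))\<^sup>2 / 4 - snd k)"
  define \<Phi> where "\<Phi> = (\<lambda>(x::'a) (k::'a\<times>real). (norm x)\<^sup>2 + inner x (fst k) - snd k)"
  have PK: "P \<subseteq> K" unfolding K_def by (rule hull_subset)
  have convK: "convex K" unfolding K_def by simp
  have Phi_eq: "inner (x + b - z) (x - a) = \<Phi> x (f (a,b))" for x a b
    by (simp add: \<Phi>_def f_def power2_norm_eq_inner inner_diff_left inner_diff_right inner_add_left inner_add_right inner_commute algebra_simps)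
  have hle: "h k \<le> 0" if "k \<in> K" for k
  proof -
    from that obtain S u where S: "finite S" "S \<subseteq> P" "\<forall>x\<in>S. 0 \<le> u x" "sum u S = 1"
      "(\<Sum>v\<in>S. u v *\<^sub>R v) = k"
      unfolding K_def convex_hull_explicit by blast
    define g where "g = (\<lambda>p. inv_into G f p)"
    have gG: "g p \<in> G" "f (g p) = p" if "p \<in> S" for p
      using S(2) that unfolding g_def P_def by (auto intro: inv_into_into f_inv_into_f)
    define a where "a = (\<lambda>p. fst (g p))"
    define b where "b = (\<lambda>p. snd (g p) - z)"
    have pe: "p = (b p - a p, inner (a p) (b p))" if "p \<in> S" for p
      using gG[OF that] by (auto simp: f_def a_def b_def split: prod.splits)
    have mon: "\<forall>p\<in>S. \<forall>q\<in>S. inner (a p - a q) (b p - b q) \<ge> 0"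
    proof (intro ballI)
      fix p q assume "p \<in> S" "q \<in> S"
      then have "snd (g p) \<in> T (fst (g p))" "snd (g q) \<in> T (fst (g q))"
        using gG(1)[OF \<open>p \<in> S\<close>] gG(1)[OF \<open>q \<in> S\<close>] by (simp_all add: G_def case_prod_beta)
      then show "inner (a p - a q) (b p - b q) \<ge> 0"
        using mono unfolding monotone_op_def a_def b_def by (simp add: algebra_simps)
    qed
    have "fst k = (\<Sum>p\<in>S. u p *\<^sub>R (b p - a p))"
      unfolding S(5)[symmetric] fst_sum by (intro sum.cong refl) (subst pe, auto)
    moreover have "snd k = (\<Sum>p\<in>S. u p * inner (a p) (b p))"
      unfolding S(5)[symmetric] snd_sum by (intro sum.cong refl) (subst pe, auto)
    ultimately show ?thesis
      using mono_sum_ineq[OF S(1) S(3) S(4) mon] unfolding h_def by simp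
  qed
  have "\<exists>x. \<forall>k\<in>K. \<Phi> x k \<le> 0"
  proof (cases "K = {}")
    case True then show ?thesis by simp
  next
    case False
    define v where "v = Sup (h ` K)"
    have bdd: "bdd_above (h ` K)" using hle by (intro bdd_aboveI[of _ 0]) auto
    have hv: "h k \<le> v" if "k \<in> K" for k unfolding v_def using bdd that by (auto intro: cSUP_upper)
    have v0: "v \<le> 0" unfolding v_def using False hle by (auto intro: cSUP_least)
    have "\<exists>k\<in>K. v - 1 / real (Suc n) < h k" for n
    proof (rule ccontr)
      assume "\<not> ?thesis"
      then have "\<forall>k\<in>K. h k \<le> v - 1 / real (Suc n)" by auto
      then have "Sup (h ` K) \<le> v - 1 / real (Suc n)" using False by (intro cSUP_least) auto
      then have "v \<le> v - 1 / real (Suc n)" unfolding v_def .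
      then show False by simp
    qed
    then obtain kk where kk: "\<And>n. kk n \<in> K" "\<And>n. v - 1 / real (Suc n) < h (kk n)" by metis
    define c where "c = (\<lambda>n. fst (kk n))"
    have mid: "(norm (c n - c m))\<^sup>2 \<le> 8 * (1 / real (Suc n) + 1 / real (Suc m))" for n m
    proof -
      have "(1/2) *\<^sub>R kk n + (1/2) *\<^sub>R kk m \<in> K"
        by (rule convexD[OF convK kk(1) kk(1)]) auto
      then have hm: "h ((1/2) *\<^sub>R kk n + (1/2) *\<^sub>R kk m) \<le> v" by (rule hv)
      have "h ((1/2) *\<^sub>R kk n + (1/2) *\<^sub>R kk m) = (h (kk n) + h (kk m)) / 2 + (norm (c n - c m))\<^sup>2 / 16"
        by (simp add: h_def c_def power2_norm_eq_inner inner_diff_left inner_diff_right inner_add_left inner_add_right inner_commute algebra_simps) (simp add: field_simps)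
      then show ?thesis using hm kk(2)[of n] kk(2)[of m] by argo
    qed
    have "Cauchy c"
    proof (rule metric_CauchyI)
      fix e :: real assume "e > 0"
      obtain N :: nat where N: "16 / (e*e) < real N" using reals_Archimedean2 by blast
      show "\<exists>M. \<forall>m\<ge>M. \<forall>n\<ge>M. dist (c m) (c n) < e"
      proof (intro exI allI impI)
        fix m n assume "N \<le> m" "N \<le> n"
        have "1 / real (Suc n) \<le> 1 / real (Suc N)" "1 / real (Suc m) \<le> 1 / real (Suc N)"
          using \<open>N \<le> m\<close> \<open>N \<le> n\<close> by (auto simp: divide_simps)
        moreover have "16 / real (Suc N) < e * e"
        proof -
          have ee: "0 < e * e" using \<open>e > 0\<close> by simp
          have "16 < real N * (e * e)" using N ee by (simp add: pos_divide_less_eq)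
          also have "\<dots> \<le> real (Suc N) * (e * e)" using ee by (intro mult_right_mono) auto
          finally show ?thesis by (simp add: pos_divide_less_eq mult.commute)
        qed
        ultimately have "(norm (c m - c n))\<^sup>2 < e\<^sup>2"
          using mid[of m n] by (simp add: power2_eq_square)
        then show "dist (c m) (c n) < e" using \<open>e > 0\<close>
          by (simp add: dist_norm power_less_imp_less_base)
      qed
    qed
    then obtain cs where cs: "c \<longlonglongrightarrow> cs" using Cauchy_convergent_iff convergent_def by blast
    have hlim: "(\<lambda>n. h (kk n)) \<longlonglongrightarrow> v"
    proof (rule tendsto_sandwich[of "\<lambda>n. v - 1 / real (Suc n)" _ _ "\<lambda>n. v"])
      show "\<forall>\<^sub>F n in sequentially. v - 1 / real (Suc n) \<le> h (kk n)" using kk(2) by (intro always_eventually allI less_imp_le) auto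
      show "\<forall>\<^sub>F n in sequentially. h (kk n) \<le> v" using hv kk(1) by (intro always_eventually allI) auto
      show "(\<lambda>n. v - 1 / real (Suc n)) \<longlonglongrightarrow> v"
        using LIMSEQ_inverse_real_of_nat_add_minus[of v] by (simp add: inverse_eq_divide)
    qed simp
    define xs where "xs = - (1/2) *\<^sub>R cs"
    have "\<Phi> xs k \<le> v" if kK: "k \<in> K" for k
    proof -
      obtain cc d where kcd: "k = (cc, d)" by (cases k)
      have step: "\<Phi> xs k \<le> t / 4 * (norm (cc - cs))\<^sup>2 + v" if t: "0 < t" "t \<le> 1" for t
      proof -
        have ineq: "t * \<Phi> (- (1/2) *\<^sub>R c n) k \<le> v - h (kk n) + t\<^sup>2 / 4 * (norm (cc - c n))\<^sup>2 + t * h (kk n)" for n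
        proof -
          have "(1 - t) *\<^sub>R kk n + t *\<^sub>R k \<in> K" by (rule convexD[OF convK kk(1) kK]) (use t in auto)
          then have "h ((1 - t) *\<^sub>R kk n + t *\<^sub>R k) \<le> v" by (rule hv)
          moreover have "t * \<Phi> (- (1/2) *\<^sub>R c n) k = h ((1 - t) *\<^sub>R kk n + t *\<^sub>R k) - h (kk n) + t\<^sup>2 / 4 * (norm (cc - c n))\<^sup>2 + t * h (kk n)"
            by (simp add: kcd h_def \<Phi>_def c_def power2_norm_eq_inner inner_diff_left inner_diff_right inner_add_left inner_add_right inner_commute algebra_simps) (simp add: field_simps power2_eq_square)
          ultimately show ?thesis by linarith
        qed
        have l1: "(\<lambda>n. t * \<Phi> (- (1/2) *\<^sub>R c n) k) \<longlonglongrightarrow> t * \<Phi> xs k"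
          unfolding \<Phi>_def xs_def by (intro tendsto_intros cs)
        have l2: "(\<lambda>n. v - h (kk n) + t\<^sup>2 / 4 * (norm (cc - c n))\<^sup>2 + t * h (kk n)) \<longlonglongrightarrow> v - v + t\<^sup>2 / 4 * (norm (cc - cs))\<^sup>2 + t * v"
          by (intro tendsto_intros cs hlim)
        have "t * \<Phi> xs k \<le> v - v + t\<^sup>2 / 4 * (norm (cc - cs))\<^sup>2 + t * v"
          by (rule LIMSEQ_le[OF l1 l2]) (use ineq in auto)
        then have "t * \<Phi> xs k \<le> t * (t / 4 * (norm (cc - cs))\<^sup>2 + v)"
          by (simp add: power2_eq_square algebra_simps)
        then show ?thesis using t by simp
      qed
      show ?thesis
      proof (rule ccontr)
        assume nt: "\<not> ?thesis"
        define M where "M = (norm (cc - cs))\<^sup>2"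
        define t where "t = min 1 ((\<Phi> xs k - v) / (M + 1))"
        have M0: "M \<ge> 0" unfolding M_def by simp
        have t0: "0 < t" "t \<le> 1" unfolding t_def using nt M0 by auto
        have "t * M \<le> (\<Phi> xs k - v) / (M + 1) * M" unfolding t_def using M0 by (intro mult_right_mono) auto
        also have "\<dots> < \<Phi> xs k - v" using M0 nt by (simp add: divide_simps)
        finally have "t / 4 * M < \<Phi> xs k - v" using t0 M0 nt by simp
        then show False using step[OF t0] unfolding M_def by simp
      qed
    qed
    then show ?thesis using v0 by (intro exI[of _ xs]) (meson order_trans)
  qed
  then obtain x where x: "\<forall>k\<in>K. \<Phi> x k \<le> 0" by blast
  show ?thesis
  proof (intro exI allI impI)
    fix a b assume "b \<in> T a"
    then have "f (a, b) \<in> K" using PK unfolding P_def G_def by auto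
    then show "inner (x + b - z) (x - a) \<le> 0" using x Phi_eq by simp
  qed
qed

lemma minty:
  fixes T :: "'a::{real_inner,complete_space} \<Rightarrow> 'a set"
  assumes "maximally_monotone T"
  shows "\<exists>y. z - y \<in> T y"
proof -
  have mono: "monotone_op T" using assms unfolding maximally_monotone_def by blast
  obtain x where x: "\<forall>a b. b \<in> T a \<longrightarrow> inner (x + b - z) (x - a) \<le> 0"
    using minty_point[OF mono] by blast
  define T' where "T' = (\<lambda>p. if p = x then insert (z - x) (T p) else T p)"
  have "monotone_op T'"
    unfolding monotone_op_def
  proof (intro allI impI)
    fix p q u w assume u: "u \<in> T' p" and w: "w \<in> T' q"
    have m: "inner (p - q) (u - w) \<ge> 0" if "u \<in> T p" "w \<in> T q" for p q u w
      using mono that unfolding monotone_op_def by blast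
    have n1: "inner (x - q) ((z - x) - w) \<ge> 0" if "w \<in> T q" for q w
    proof -
      have "inner (x + w - z) (x - q) \<le> 0" using x that by blast
      moreover have "inner (x - q) ((z - x) - w) = - inner (x + w - z) (x - q)"
        by (simp add: inner_diff_left inner_diff_right inner_add_left inner_add_right inner_commute algebra_simps)
      ultimately show ?thesis by simp
    qed
    have n2: "inner (q - x) (w - (z - x)) \<ge> 0" if "w \<in> T q" for q w
    proof -
      have "inner (q - x) (w - (z - x)) = inner (x - q) ((z - x) - w)"
        by (simp add: inner_diff_left inner_diff_right algebra_simps)
      then show ?thesis using n1[OF that] by simp
    qed
    show "inner (p - q) (u - w) \<ge> 0"
      using u w m n1 n2 unfolding T'_def by (auto split: if_splits)
  qed
  moreover have "\<forall>p. T p \<subseteq> T' p" unfolding T'_def by auto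
  ultimately have "T' = T" using assms unfolding maximally_monotone_def by blast
  moreover have "z - x \<in> T' x" unfolding T'_def by simp
  ultimately have "z - x \<in> T x" by simp
  then show ?thesis by blast
qed

lemma resolvent_in:
  fixes T :: "'a::{real_inner,complete_space} \<Rightarrow> 'a set"
  assumes "maximally_monotone T"
  shows "z - resolvent T z \<in> T (resolvent T z)"
proof -
  have mono: "monotone_op T" using assms unfolding maximally_monotone_def by blast
  obtain y where y: "z - y \<in> T y" using minty[OF assms] by blast
  have uniq: "y' = y" if "z - y' \<in> T y'" for y'
  proof -
    have "inner (y' - y) ((z - y') - (z - y)) \<ge> 0" using mono that y unfolding monotone_op_def by blast
    moreover have "inner (y' - y) ((z - y') - (z - y)) = - (norm (y' - y))\<^sup>2"
      by (simp add: power2_norm_eq_inner inner_diff_left inner_diff_right algebra_simps inner_commute)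
    ultimately show ?thesis by simp
  qed
  have "resolvent T z = y" unfolding resolvent_def using y uniq by (rule the_equality)
  then show ?thesis using y by simp
qed

lemma scale_op_scale_op: "scale_op a (scale_op b A) = scale_op (a * b) A"
  unfolding scale_op_def by (auto simp: image_image fun_eq_iff)

lemma scale_maximally_monotone:
  fixes A :: "'a::real_inner \<Rightarrow> 'a set"
  assumes "c > 0" "maximally_monotone A"
  shows "maximally_monotone (scale_op c A)"
proof -
  have monoS: "monotone_op (scale_op d B)" if "d > 0" "monotone_op B" for d and B :: "'a \<Rightarrow> 'a set"
    unfolding monotone_op_def
  proof (intro allI impI)
    fix x y u v assume "u \<in> scale_op d B x" "v \<in> scale_op d B y"
    then obtain u' v' where "u' \<in> B x" "v' \<in> B y" "u = d *\<^sub>R u'" "v = d *\<^sub>R v'"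
      unfolding scale_op_def by auto
    moreover have "inner (x - y) (u' - v') \<ge> 0" using that(2) calculation(1,2) unfolding monotone_op_def by blast
    ultimately show "inner (x - y) (u - v) \<ge> 0"
      using that(1) by (simp add: scaleR_diff_right[symmetric])
  qed
  have mA: "monotone_op A" using assms unfolding maximally_monotone_def by blast
  show ?thesis unfolding maximally_monotone_def
  proof (intro conjI allI impI)
    show "monotone_op (scale_op c A)" using monoS[OF assms(1) mA] .
    fix B assume B: "monotone_op B \<and> (\<forall>x. scale_op c A x \<subseteq> B x)"
    have "monotone_op (scale_op (1/c) B)" using monoS B assms(1) by simp
    moreover have "\<forall>x. A x \<subseteq> scale_op (1/c) B x"
    proof (intro allI subsetI)
      fix x a assume "a \<in> A x"
      then have "c *\<^sub>R a \<in> B x" using B unfolding scale_op_def by auto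
      then have "(1/c) *\<^sub>R (c *\<^sub>R a) \<in> scale_op (1/c) B x" unfolding scale_op_def by (rule imageI)
      then show "a \<in> scale_op (1/c) B x" using assms(1) by simp
    qed
    ultimately have "scale_op (1/c) B = A" using assms(2) unfolding maximally_monotone_def by blast
    moreover have "scale_op c (scale_op (1/c) B) = B" using assms(1)
      unfolding scale_op_scale_op by (simp add: scale_op_def)
    ultimately show "B = scale_op c A" by metis
  qed
qed

lemma nsq_add: "(norm (x + y))\<^sup>2 = (norm x)\<^sup>2 + 2 * inner x y + (norm (y::'a::real_inner))\<^sup>2"
  by (simp add: power2_norm_eq_inner inner_add_left inner_add_right inner_commute)

lemma nsq_diff: "(norm (x - y))\<^sup>2 = (norm x)\<^sup>2 - 2 * inner x y + (norm (y::'a::real_inner))\<^sup>2"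
  by (simp add: power2_norm_eq_inner inner_diff_left inner_diff_right inner_commute)

lemma riesz_subspace:
  fixes V :: "'a::{real_inner,complete_space} set" and g :: "'a \<Rightarrow> real"
  assumes sub: "subspace V" and cl: "closed V"
    and ladd: "\<forall>y\<in>V. \<forall>y'\<in>V. g (y + y') = g y + g y'"
    and lsc: "\<forall>y\<in>V. \<forall>c. g (c *\<^sub>R y) = c * g y"
    and bnd: "\<forall>y\<in>V. \<bar>g y\<bar> \<le> K * norm y"
  shows "\<exists>p\<in>V. \<forall>v\<in>V. inner p v = g v"
proof -
  define \<phi> where "\<phi> = (\<lambda>y. (norm y)\<^sup>2 - 2 * g y)"
  have V0: "0 \<in> V" using sub by (rule subspace_0)
  have Vadd: "y + y' \<in> V" if "y \<in> V" "y' \<in> V" for y y' using sub that by (rule subspace_add)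
  have Vsc: "c *\<^sub>R y \<in> V" if "y \<in> V" for c y using sub that by (rule subspace_scale)
  have Vdiff: "y - y' \<in> V" if "y \<in> V" "y' \<in> V" for y y' using sub that by (rule subspace_diff)
  have lb: "\<phi> y \<ge> - K\<^sup>2" if "y \<in> V" for y
  proof -
    have "g y \<le> K * norm y" using bnd that by fastforce
    moreover have "0 \<le> (norm y - K)\<^sup>2" by simp
    ultimately show ?thesis unfolding \<phi>_def by (simp add: power2_eq_square algebra_simps)
  qed
  define \<mu> where "\<mu> = Inf (\<phi> ` V)"
  have bdd: "bdd_below (\<phi> ` V)" using lb by (intro bdd_belowI[of _ "- K\<^sup>2"]) auto
  have mu_le: "\<mu> \<le> \<phi> y" if "y \<in> V" for y unfolding \<mu>_def using bdd that by (auto intro: cINF_lower)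
  have "\<exists>y\<in>V. \<phi> y < \<mu> + 1 / real (Suc n)" for n
  proof (rule ccontr)
    assume "\<not> ?thesis"
    then have "\<forall>y\<in>V. \<mu> + 1 / real (Suc n) \<le> \<phi> y" by auto
    then have "\<mu> + 1 / real (Suc n) \<le> Inf (\<phi> ` V)" using V0 by (intro cINF_greatest) auto
    then show False unfolding \<mu>_def[symmetric] by simp
  qed
  then obtain y where y: "\<And>n. y n \<in> V" "\<And>n. \<phi> (y n) < \<mu> + 1 / real (Suc n)" by metis
  have gmid: "g ((1/2) *\<^sub>R (a + b)) = (g a + g b) / 2" if "a \<in> V" "b \<in> V" for a b
    using lsc ladd Vadd that by simp
  have mid: "(norm (y n - y m))\<^sup>2 \<le> 2 * (1 / real (Suc n) + 1 / real (Suc m))" for n m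
  proof -
    have "\<mu> \<le> \<phi> ((1/2) *\<^sub>R (y n + y m))" using y(1) by (intro mu_le Vsc Vadd)
    moreover have "\<phi> (y n) + \<phi> (y m) = 2 * \<phi> ((1/2) *\<^sub>R (y n + y m)) + (norm (y n - y m))\<^sup>2 / 2"
      unfolding \<phi>_def gmid[OF y(1) y(1)]
      by (simp add: power2_norm_eq_inner inner_diff_left inner_diff_right inner_add_left inner_add_right inner_commute algebra_simps) (simp add: field_simps)
    ultimately show ?thesis using y(2)[of n] y(2)[of m] by argo
  qed
  have "Cauchy y"
  proof (rule metric_CauchyI)
    fix e :: real assume "e > 0"
    obtain N :: nat where N: "4 / (e*e) < real N" using reals_Archimedean2 by blast
    show "\<exists>M. \<forall>m\<ge>M. \<forall>n\<ge>M. dist (y m) (y n) < e"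
    proof (intro exI allI impI)
      fix m n assume "N \<le> m" "N \<le> n"
      have "1 / real (Suc n) \<le> 1 / real (Suc N)" "1 / real (Suc m) \<le> 1 / real (Suc N)"
        using \<open>N \<le> m\<close> \<open>N \<le> n\<close> by (auto simp: divide_simps)
      moreover have "4 / real (Suc N) < e * e"
      proof -
        have ee: "0 < e * e" using \<open>e > 0\<close> by simp
        have "4 < real N * (e * e)" using N ee by (simp add: pos_divide_less_eq)
        also have "\<dots> \<le> real (Suc N) * (e * e)" using ee by (intro mult_right_mono) auto
        finally show ?thesis by (simp add: pos_divide_less_eq mult.commute)
      qed
      ultimately have "(norm (y m - y n))\<^sup>2 < e\<^sup>2"
        using mid[of m n] by (simp add: power2_eq_square)
      then show "dist (y m) (y n) < e" using \<open>e > 0\<close>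
        by (simp add: dist_norm power_less_imp_less_base)
    qed
  qed
  then obtain p where p: "y \<longlonglongrightarrow> p" using Cauchy_convergent_iff convergent_def by blast
  have pV: "p \<in> V" using cl y(1) p unfolding closed_sequential_limits by blast
  have gdiff: "g (a - b) = g a - g b" if "a \<in> V" "b \<in> V" for a b
  proof -
    have bV: "(-1) *\<^sub>R b \<in> V" using Vsc that(2) .
    have "g (a + (-1) *\<^sub>R b) = g a + g ((-1) *\<^sub>R b)" using ladd that(1) bV by blast
    also have "g ((-1) *\<^sub>R b) = (-1) * g b" using lsc that(2) by blast
    finally show ?thesis by simp
  qed
  have glim: "(\<lambda>n. g (y n)) \<longlonglongrightarrow> g p"
  proof -
    have "(\<lambda>n. K * norm (y n - p)) \<longlonglongrightarrow> K * norm (p - p)" by (intro tendsto_intros p)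
    then have z: "(\<lambda>n. K * norm (y n - p)) \<longlonglongrightarrow> 0" by simp
    have bb: "\<bar>g (y n) - g p\<bar> \<le> K * norm (y n - p)" for n
      using bnd Vdiff[OF y(1) pV] gdiff[OF y(1) pV] by metis
    have "(\<lambda>n. g (y n) - g p) \<longlonglongrightarrow> 0"
      apply (rule tendsto_sandwich[of "\<lambda>n. - (K * norm (y n - p))" _ _ "\<lambda>n. K * norm (y n - p)"])
      subgoal using abs_le_D2[OF bb] by (intro always_eventually allI) (smt (verit))
      subgoal using abs_le_D1[OF bb] by (intro always_eventually allI) auto
      using tendsto_minus[OF z] z by auto
    then show ?thesis by (simp add: LIM_zero_iff)
  qed
  have phip: "\<phi> p \<le> \<mu>"
  proof -
    have l1: "(\<lambda>n. \<phi> (y n)) \<longlonglongrightarrow> \<phi> p" unfolding \<phi>_def by (intro tendsto_intros p glim)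
    have l2: "(\<lambda>n. \<mu> + 1 / real (Suc n)) \<longlonglongrightarrow> \<mu>"
      using LIMSEQ_inverse_real_of_nat_add[of \<mu>] by (simp add: inverse_eq_divide)
    show ?thesis by (rule LIMSEQ_le[OF l1 l2]) (use y(2) in \<open>auto intro: less_imp_le\<close>)
  qed
  show ?thesis
  proof (intro bexI[OF _ pV] ballI)
    fix v assume vV: "v \<in> V"
    define a where "a = inner p v - g v"
    define b where "b = (norm v)\<^sup>2"
    have quad: "\<phi> (p + t *\<^sub>R v) = \<phi> p + 2 * t * a + t\<^sup>2 * b" for t
    proof -
      have "g (p + t *\<^sub>R v) = g p + t * g v" using ladd lsc pV vV Vsc by simp
      then show ?thesis unfolding \<phi>_def a_def b_def nsq_add
        by (simp add: power_mult_distrib algebra_simps)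
    qed
    have nn: "2 * t * a + t\<^sup>2 * b \<ge> 0" for t
      using mu_le[OF Vadd[OF pV Vsc[OF vV, of t]]] phip quad[of t] by simp
    show "inner p v = g v"
    proof (rule ccontr)
      assume "inner p v \<noteq> g v"
      then have a0: "a \<noteq> 0" unfolding a_def by simp
      have b0: "b \<ge> 0" unfolding b_def by simp
      define t where "t = - a / (b + 1)"
      have b1: "b + 1 > 0" using b0 by auto
      have td: "t * (b + 1) = - a" unfolding t_def using b1 by simp
      have "(b + 1)\<^sup>2 * (2 * t * a + t\<^sup>2 * b) = 2 * (t * (b + 1)) * a * (b + 1) + (t * (b + 1))\<^sup>2 * b"
        by (simp add: algebra_simps power2_eq_square)
      also have "\<dots> = - (a\<^sup>2 * (b + 2))" unfolding td by (simp add: algebra_simps power2_eq_square)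
      also have "\<dots> < 0" using a0 b0 by (simp add: add_nonneg_pos)
      finally have "(b + 1)\<^sup>2 * (2 * t * a + t\<^sup>2 * b) < 0" .
      then have "2 * t * a + t\<^sup>2 * b < 0" using b1 by (simp add: mult_less_0_iff)
      then show False using nn[of t] by simp
    qed
  qed
qed

lemma weak_compact:
  fixes s :: "nat \<Rightarrow> 'a::{real_inner,complete_space}"
  assumes bnd: "\<And>n. norm (s n) \<le> M"
  shows "\<exists>r l. strict_mono r \<and> weakly_converges (s \<circ> r) l"
proof -
  have M0: "M \<ge> 0" using bnd[of 0] norm_ge_zero order_trans by blast
  have ipb: "\<bar>inner (s n) w\<bar> \<le> M * norm w" for n w
    using Cauchy_Schwarz_ineq2[of "s n" w] bnd[of n] by (meson mult_right_mono norm_ge_zero order_trans)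
  interpret subseqs "\<lambda>j r. convergent (\<lambda>k. inner (s (r k)) (s j))"
  proof
    fix j and f :: "nat \<Rightarrow> nat" assume "strict_mono f"
    have "bounded (range (\<lambda>k. inner (s (f k)) (s j)))"
      unfolding bounded_iff using ipb by (auto simp: real_norm_def)
    then obtain l r where "strict_mono r" "((\<lambda>k. inner (s (f k)) (s j)) \<circ> r) \<longlonglongrightarrow> l"
      using bounded_imp_convergent_subsequence by blast
    then show "\<exists>r'. strict_mono r' \<and> convergent (\<lambda>k. inner (s ((f \<circ> r') k)) (s j))"
      by (auto simp: convergent_def o_def)
  qed
  define r where "r = diagseq"
  have r: "strict_mono r" unfolding r_def by (rule subseq_diagseq)
  have conv_sj: "convergent (\<lambda>k. inner (s (r k)) (s j))" for j
  proof -
    have "convergent (\<lambda>k. inner (s ((diagseq \<circ> (+) (Suc j)) k)) (s j))"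
      by (rule diagseq_holds) (auto intro: convergent_subseq_convergent[unfolded o_def] simp: o_def)
    then have "convergent (\<lambda>k. inner (s (diagseq (k + Suc j))) (s j))" by (simp add: o_def add.commute)
    then show ?thesis unfolding r_def using convergent_ignore_initial_segment[of "\<lambda>k. inner (s (diagseq k)) (s j)" "Suc j"] by simp
  qed
  define W where "W = {w. convergent (\<lambda>k. inner (s (r k)) w)}"
  have subW: "subspace W"
    unfolding subspace_def
  proof (intro conjI ballI allI)
    show "0 \<in> W" unfolding W_def by (simp add: convergent_const)
    fix x y assume "x \<in> W" "y \<in> W"
    then show "x + y \<in> W" unfolding W_def by (simp add: inner_add_right convergent_add)
  next
    fix c x assume "x \<in> W"
    then show "c *\<^sub>R x \<in> W" unfolding W_def
      by (cases "c = 0") (simp_all add: convergent_const convergent_mult_const_iff)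
  qed
  have clW: "closed W"
    unfolding closed_sequential_limits
  proof (intro allI impI)
    fix ww w assume a: "(\<forall>n. ww n \<in> W) \<and> ww \<longlonglongrightarrow> w"
    show "w \<in> W" unfolding W_def mem_Collect_eq Cauchy_convergent_iff[symmetric]
    proof (rule metric_CauchyI)
      fix e :: real assume e: "e > 0"
      have "\<forall>\<^sub>F n in sequentially. dist (ww n) w < e / (3 * (M + 1))"
        using a e M0 tendstoD by (metis divide_pos_pos less_add_same_cancel2 zero_less_mult_iff zero_less_numeral add_nonneg_pos zero_less_one)
      then obtain j where j: "norm (ww j - w) < e / (3 * (M + 1))"
        by (metis eventually_sequentially dist_norm order_refl)
      have "convergent (\<lambda>k. inner (s (r k)) (ww j))" using a unfolding W_def by auto
      then have "Cauchy (\<lambda>k. inner (s (r k)) (ww j))" by (simp add: Cauchy_convergent_iff)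
      then obtain N where N: "\<forall>m\<ge>N. \<forall>n\<ge>N. dist (inner (s (r m)) (ww j)) (inner (s (r n)) (ww j)) < e / 3"
        using e by (meson metric_CauchyD zero_less_divide_iff zero_less_numeral)
      have close: "\<bar>inner (s (r k)) w - inner (s (r k)) (ww j)\<bar> < e / 3" for k
      proof -
        have "\<bar>inner (s (r k)) w - inner (s (r k)) (ww j)\<bar> = \<bar>inner (s (r k)) (ww j - w)\<bar>"
          by (simp add: inner_diff_right abs_minus_commute)
        also have "\<dots> \<le> M * norm (ww j - w)" by (rule ipb)
        also have "\<dots> \<le> M * (e / (3 * (M + 1)))" using j M0 by (intro mult_left_mono) auto
        also have "\<dots> < e / 3" using M0 e by (simp add: divide_simps)
        finally show ?thesis .
      qed
      show "\<exists>N. \<forall>m\<ge>N. \<forall>n\<ge>N. dist (inner (s (r m)) w) (inner (s (r n)) w) < e"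
      proof (intro exI allI impI)
        fix m n assume "N \<le> m" "N \<le> n"
        then have "\<bar>inner (s (r m)) (ww j) - inner (s (r n)) (ww j)\<bar> < e / 3" using N by (auto simp: dist_real_def)
        then show "dist (inner (s (r m)) w) (inner (s (r n)) w) < e"
          using close[of m] close[of n] unfolding dist_real_def by linarith
      qed
    qed
  qed
  have sW: "s j \<in> W" for j unfolding W_def using conv_sj by simp
  define f where "f = (\<lambda>w. lim (\<lambda>k. inner (s (r k)) w))"
  have flim: "(\<lambda>k. inner (s (r k)) w) \<longlonglongrightarrow> f w" if "w \<in> W" for w
    using that unfolding W_def f_def by (simp add: convergent_LIMSEQ_iff)
  have "\<exists>l\<in>W. \<forall>v\<in>W. inner l v = f v"
  proof (rule riesz_subspace[OF subW clW, where K = M])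
    show "\<forall>y\<in>W. \<forall>y'\<in>W. f (y + y') = f y + f y'"
    proof (intro ballI)
      fix y y' assume "y \<in> W" "y' \<in> W"
      then have "(\<lambda>k. inner (s (r k)) y + inner (s (r k)) y') \<longlonglongrightarrow> f y + f y'" by (intro tendsto_add flim)
      moreover have "(\<lambda>k. inner (s (r k)) (y + y')) \<longlonglongrightarrow> f (y + y')" using \<open>y \<in> W\<close> \<open>y' \<in> W\<close> subW
        by (intro flim) (rule subspace_add)
      ultimately show "f (y + y') = f y + f y'" by (simp add: inner_add_right LIMSEQ_unique)
    qed
    show "\<forall>y\<in>W. \<forall>c. f (c *\<^sub>R y) = c * f y"
    proof (intro ballI allI)
      fix y c assume "y \<in> W"
      then have "(\<lambda>k. c * inner (s (r k)) y) \<longlonglongrightarrow> c * f y" by (intro tendsto_mult tendsto_const flim)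
      moreover have "(\<lambda>k. inner (s (r k)) (c *\<^sub>R y)) \<longlonglongrightarrow> f (c *\<^sub>R y)" using \<open>y \<in> W\<close> subW
        by (intro flim) (rule subspace_scale)
      ultimately show "f (c *\<^sub>R y) = c * f y" by (simp add: LIMSEQ_unique)
    qed
    show "\<forall>y\<in>W. \<bar>f y\<bar> \<le> M * norm y"
    proof (intro ballI)
      fix y assume "y \<in> W"
      have "(\<lambda>k. \<bar>inner (s (r k)) y\<bar>) \<longlonglongrightarrow> \<bar>f y\<bar>" by (intro tendsto_rabs flim \<open>y \<in> W\<close>)
      then show "\<bar>f y\<bar> \<le> M * norm y" by (rule LIMSEQ_le_const2) (use ipb in auto)
    qed
  qed
  then obtain l where lW: "l \<in> W" and l: "\<forall>v\<in>W. inner l v = f v" by blast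
  have "weakly_converges (s \<circ> r) l"
    unfolding weakly_converges_def
  proof
    fix w
    have "\<exists>p\<in>W. \<forall>v\<in>W. inner p v = inner w v"
      by (rule riesz_subspace[OF subW clW, where K = "norm w"])
        (auto simp: inner_add_right Cauchy_Schwarz_ineq2)
    then obtain p where pW: "p \<in> W" and p: "\<forall>v\<in>W. inner p v = inner w v" by blast
    have "(\<lambda>k. inner (s (r k)) p) \<longlonglongrightarrow> f p" by (rule flim[OF pW])
    moreover have "inner (s (r k)) p = inner (s (r k)) w" for k using p sW by (metis inner_commute)
    moreover have "f p = inner l w" using l pW p lW by (metis inner_commute)
    ultimately show "(\<lambda>n. inner ((s \<circ> r) n) w) \<longlonglongrightarrow> inner l w" by (simp add: o_def)
  qed
  then show ?thesis using r by blast
qed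

lemma young_inner:
  fixes a b :: "'a::real_inner"
  assumes "t > 0"
  shows "inner a b \<le> (norm a)\<^sup>2 / (2 * t) + t / 2 * (norm b)\<^sup>2"
proof -
  have "0 \<le> (norm (a - t *\<^sub>R b))\<^sup>2" by simp
  also have "\<dots> = (norm a)\<^sup>2 - 2 * t * inner a b + t\<^sup>2 * (norm b)\<^sup>2"
    by (simp add: nsq_diff power_mult_distrib)
  finally have "2 * t * inner a b \<le> (norm a)\<^sup>2 + t\<^sup>2 * (norm b)\<^sup>2" by simp
  then have "inner a b \<le> ((norm a)\<^sup>2 + t\<^sup>2 * (norm b)\<^sup>2) / (2 * t)" using assms
    by (simp add: pos_le_divide_eq mult.commute mult.left_commute)
  also have "\<dots> = (norm a)\<^sup>2 / (2 * t) + t / 2 * (norm b)\<^sup>2" using assms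
    by (simp add: field_simps power2_eq_square)
  finally show ?thesis .
qed

definition Wf :: "real \<Rightarrow> real \<Rightarrow> real \<Rightarrow> 'a::real_inner \<Rightarrow> 'a \<Rightarrow> 'a \<Rightarrow> real \<Rightarrow> 'a \<Rightarrow> 'a \<Rightarrow> 'a \<Rightarrow> 'a \<Rightarrow> real" where
  "Wf \<gamma> lam L x xs xp U ub ubs bx bxp = 1 / (2 * \<gamma>) * (norm (x - xs))\<^sup>2 + lam / 2 * U - inner (x - xs) (ub - ubs)
     - inner (bx - bxp) (x - xs) + L / 2 * (norm (x - xp))\<^sup>2"

lemma step_ineq:
  fixes x0 x1 xp xs ub0 ub1 ubs bx0 bx1 bxp bxs cx0 cxs :: "'a::real_inner"
  assumes H1: "x1 = x0 - \<gamma> *\<^sub>R ub0 - \<gamma> *\<^sub>R (2 *\<^sub>R bx0 - bxp) - \<gamma> *\<^sub>R cx0"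
    and H2: "ubs + bxs + cxs = 0"
    and H3: "inner (2 *\<^sub>R x1 - x0 - xs) (ub1 - ubs) + lam / 2 * (U0 - U1 - D) \<ge> 0"
    and H4: "inner (x1 - xs) (bx1 - bxs) \<ge> 0"
    and H5: "norm (bx0 - bxp) \<le> L * norm (x0 - xp)"
    and H6: "inner (x0 - xs) (cx0 - cxs) \<ge> \<beta> * (norm (cx0 - cxs))\<^sup>2"
    and H7: "(norm (ub1 - ub0))\<^sup>2 \<le> D"
    and pos: "\<gamma> > 0" "lam > 0" "\<beta> > 0" "L > 0"
  shows "Wf \<gamma> lam L x0 xs xp U0 ub0 ubs bx0 bxp - Wf \<gamma> lam L x1 xs x0 U1 ub1 ubs bx1 bx0
     \<ge> (1 / (2 * \<gamma>) - L - 1 / (2 * \<beta>) - 1 / (2 * lam)) * (norm (x1 - x0))\<^sup>2 + lam\<^sup>2 / (2 * (2 * \<beta> + lam)) * D"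
proof -
  define nd where "nd = norm (x1 - x0)"
  define X0 where "X0 = (norm (x0 - xs))\<^sup>2"
  define X1 where "X1 = (norm (x1 - xs))\<^sup>2"
  define I1 where "I1 = inner (ub0 - ubs) (x1 - xs)"
  define I2 where "I2 = inner (bx0 - bxs) (x1 - xs)"
  define I3 where "I3 = inner (bx0 - bxp) (x1 - xs)"
  define I4 where "I4 = inner (cx0 - cxs) (x1 - xs)"
  define J0 where "J0 = inner (x0 - xs) (ub0 - ubs)"
  define J1 where "J1 = inner (x1 - xs) (ub1 - ubs)"
  define P0 where "P0 = inner (bx0 - bxp) (x0 - xs)"
  define P1 where "P1 = inner (bx1 - bx0) (x1 - xs)"
  define Q where "Q = (norm (x0 - xp))\<^sup>2"
  define K where "K = inner (2 *\<^sub>R x1 - x0 - xs) (ub1 - ubs)"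
  define Y where "Y = inner (x1 - x0) (ub1 - ub0)"
  have va: "x0 - x1 = \<gamma> *\<^sub>R ((ub0 - ubs) + (bx0 - bxs) + (bx0 - bxp) + (cx0 - cxs))"
  proof -
    have e1: "((ub0 - ubs) + (bx0 - bxs) + (bx0 - bxp) + (cx0 - cxs)) + (ubs + bxs + cxs) = ub0 + (2 *\<^sub>R bx0 - bxp) + cx0"
      by (simp add: algebra_simps scaleR_2)
    have e2: "x0 - x1 = \<gamma> *\<^sub>R (ub0 + (2 *\<^sub>R bx0 - bxp) + cx0)"
      using H1 by (simp add: scaleR_right_distrib)
    show ?thesis using e1 e2 H2 by simp
  qed
  have a: "inner (x0 - x1) (x1 - xs) = \<gamma> * (I1 + I2 + I3 + I4)"
    unfolding va I1_def I2_def I3_def I4_def by (simp add: inner_add_left)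
  have b: "inner (x0 - x1) (x1 - xs) = (X0 - X1 - nd\<^sup>2) / 2"
  proof -
    have "x0 - xs = (x0 - x1) + (x1 - xs)" by simp
    then have "X0 = (norm (x0 - x1))\<^sup>2 + 2 * inner (x0 - x1) (x1 - xs) + X1"
      unfolding X0_def X1_def by (metis nsq_add)
    moreover have "norm (x0 - x1) = nd" unfolding nd_def by (rule norm_minus_commute)
    ultimately show ?thesis by simp
  qed
  have ab: "(X0 - X1 - nd\<^sup>2) / (2 * \<gamma>) = I1 + I2 + I3 + I4"
    using a b pos(1) by (simp add: field_simps)
  have c: "I2 \<ge> - P1"
  proof -
    have "I2 = inner (bx1 - bxs) (x1 - xs) - P1" unfolding I2_def P1_def by (simp add: inner_diff_left)
    then show ?thesis using H4 by (simp add: inner_commute)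
  qed
  have d: "I3 \<ge> P0 - L / 2 * Q - L / 2 * nd\<^sup>2"
  proof -
    have "I3 = P0 + inner (bx0 - bxp) (x1 - x0)" unfolding I3_def P0_def by (simp add: inner_diff_right)
    moreover have "inner (bx0 - bxp) (x1 - x0) \<ge> - (norm (bx0 - bxp) * nd)"
      unfolding nd_def using Cauchy_Schwarz_ineq2[of "bx0 - bxp" "x1 - x0"] by linarith
    moreover have "norm (bx0 - bxp) * nd \<le> L * norm (x0 - xp) * nd"
      using H5 unfolding nd_def by (simp add: mult_right_mono)
    moreover have "L * norm (x0 - xp) * nd \<le> L / 2 * Q + L / 2 * nd\<^sup>2"
    proof -
      have "0 \<le> L / 2 * (norm (x0 - xp) - nd)\<^sup>2" using pos by simp
      then show ?thesis unfolding Q_def by (simp add: power2_eq_square algebra_simps)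
    qed
    ultimately show ?thesis by linarith
  qed
  have e: "I4 \<ge> - nd\<^sup>2 / (4 * \<beta>)"
  proof -
    define cn where "cn = norm (cx0 - cxs)"
    have "I4 = inner (x0 - xs) (cx0 - cxs) + inner (cx0 - cxs) (x1 - x0)"
      unfolding I4_def by (simp add: inner_diff_right inner_commute)
    moreover have "inner (cx0 - cxs) (x1 - x0) \<ge> - (cn * nd)"
      unfolding nd_def cn_def using Cauchy_Schwarz_ineq2[of "cx0 - cxs" "x1 - x0"] by linarith
    moreover have "\<beta> * cn\<^sup>2 - cn * nd \<ge> - nd\<^sup>2 / (4 * \<beta>)"
    proof -
      have "0 \<le> (2 * \<beta> * cn - nd)\<^sup>2 / (4 * \<beta>)" using pos by simp
      also have "(2 * \<beta> * cn - nd)\<^sup>2 / (4 * \<beta>) = \<beta> * cn\<^sup>2 - cn * nd + nd\<^sup>2 / (4 * \<beta>)"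
        using pos by (simp add: field_simps power2_eq_square)
      finally show ?thesis by simp
    qed
    ultimately show ?thesis using H6 unfolding cn_def by linarith
  qed
  have f: "I1 - K = J0 - J1 - Y"
    unfolding I1_def K_def J0_def J1_def Y_def
    by (simp add: inner_diff_left inner_diff_right inner_add_left scaleR_2 inner_commute algebra_simps)
  define t where "t = 2 * \<beta> * lam / (2 * \<beta> + lam)"
  have tpos: "t > 0" unfolding t_def using pos by simp
  have g: "Y \<le> nd\<^sup>2 / (2 * t) + t / 2 * D"
  proof -
    have "Y \<le> nd\<^sup>2 / (2 * t) + t / 2 * (norm (ub1 - ub0))\<^sup>2"
      unfolding Y_def nd_def by (rule young_inner[OF tpos])
    also have "\<dots> \<le> nd\<^sup>2 / (2 * t) + t / 2 * D" using H7 tpos by simp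
    finally show ?thesis .
  qed
  have t1: "nd\<^sup>2 / (2 * t) = (1 / (2 * lam) + 1 / (4 * \<beta>)) * nd\<^sup>2"
    unfolding t_def using pos by (simp add: field_simps)
  have t2: "lam / 2 * D - t / 2 * D = lam\<^sup>2 / (2 * (2 * \<beta> + lam)) * D"
    unfolding t_def using pos by (simp add: field_simps power2_eq_square)
  have H3': "lam / 2 * (U0 - U1) \<ge> lam / 2 * D - K"
  proof -
    have "K + lam / 2 * (U0 - U1 - D) \<ge> 0" using H3 unfolding K_def .
    then show ?thesis by (simp add: right_diff_distrib)
  qed
  have W0: "Wf \<gamma> lam L x0 xs xp U0 ub0 ubs bx0 bxp = X0 / (2 * \<gamma>) + lam / 2 * U0 - J0 - P0 + L / 2 * Q"
    unfolding Wf_def X0_def J0_def P0_def Q_def by simp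
  have W1: "Wf \<gamma> lam L x1 xs x0 U1 ub1 ubs bx1 bx0 = X1 / (2 * \<gamma>) + lam / 2 * U1 - J1 - P1 + L / 2 * nd\<^sup>2"
    unfolding Wf_def X1_def J1_def P1_def nd_def by (simp add: norm_minus_commute)
  have sp: "X0 / (2 * \<gamma>) - X1 / (2 * \<gamma>) = nd\<^sup>2 / (2 * \<gamma>) + I1 + I2 + I3 + I4"
    using ab by (simp add: diff_divide_distrib)
  have "Wf \<gamma> lam L x0 xs xp U0 ub0 ubs bx0 bxp - Wf \<gamma> lam L x1 xs x0 U1 ub1 ubs bx1 bx0
      \<ge> nd\<^sup>2 / (2 * \<gamma>) - L * nd\<^sup>2 - nd\<^sup>2 / (4 * \<beta>) + lam / 2 * D - Y"
    unfolding W0 W1 using sp c d e f H3' by (simp add: algebra_simps)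
  moreover have "nd\<^sup>2 / (2 * \<gamma>) - L * nd\<^sup>2 - nd\<^sup>2 / (4 * \<beta>) + lam / 2 * D - Y
      \<ge> (1 / (2 * \<gamma>) - L - 1 / (2 * \<beta>) - 1 / (2 * lam)) * nd\<^sup>2 + lam\<^sup>2 / (2 * (2 * \<beta> + lam)) * D"
    using g t1 t2 by (simp add: algebra_simps) (simp add: field_simps)
  ultimately show ?thesis unfolding nd_def by linarith
qed

lemma jensen_norm:
  fixes v :: "'i \<Rightarrow> 'a::real_inner"
  assumes "finite I" "\<forall>i\<in>I. 0 \<le> w i" "sum w I = 1"
  shows "(norm (\<Sum>i\<in>I. w i *\<^sub>R v i))\<^sup>2 \<le> (\<Sum>i\<in>I. w i * (norm (v i))\<^sup>2)"
proof -
  define vb where "vb = (\<Sum>i\<in>I. w i *\<^sub>R v i)"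
  have "0 \<le> (\<Sum>i\<in>I. w i * (norm (v i - vb))\<^sup>2)" using assms by (intro sum_nonneg) auto
  also have "\<dots> = (\<Sum>i\<in>I. w i * (norm (v i))\<^sup>2) - 2 * (\<Sum>i\<in>I. inner (w i *\<^sub>R v i) vb) + (\<Sum>i\<in>I. w i) * (norm vb)\<^sup>2"
    by (simp add: nsq_diff algebra_simps sum.distrib sum_subtractf sum_distrib_left sum_distrib_right)
  also have "(\<Sum>i\<in>I. inner (w i *\<^sub>R v i) vb) = (norm vb)\<^sup>2"
  proof -
    have "inner (\<Sum>i\<in>I. w i *\<^sub>R v i) vb = (\<Sum>i\<in>I. inner (w i *\<^sub>R v i) vb)" by (rule inner_sum_left)
    then show ?thesis unfolding vb_def[symmetric] by (simp add: power2_norm_eq_inner)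
  qed
  finally show ?thesis using assms(3) unfolding vb_def by simp
qed

lemma E_lower:
  fixes a b :: "'a::real_inner"
  assumes "(norm b)\<^sup>2 \<le> U" "lam > 0" "\<beta> > 0"
  shows "1 / (2 * \<gamma>) * (norm a)\<^sup>2 + lam / 2 * U - inner a b
     \<ge> (1 / (2 * \<gamma>) - 1 / (2 * lam) - 1 / (4 * \<beta>)) * (norm a)\<^sup>2 + lam\<^sup>2 / (2 * (2 * \<beta> + lam)) * U"
proof -
  define t where "t = 2 * \<beta> * lam / (2 * \<beta> + lam)"
  have tpos: "t > 0" unfolding t_def using assms by simp
  have "inner a b \<le> (norm a)\<^sup>2 / (2 * t) + t / 2 * (norm b)\<^sup>2" by (rule young_inner[OF tpos])
  also have "\<dots> \<le> (norm a)\<^sup>2 / (2 * t) + t / 2 * U" using assms tpos by simp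
  finally have y: "inner a b \<le> (norm a)\<^sup>2 / (2 * t) + t / 2 * U" .
  have t1: "(norm a)\<^sup>2 / (2 * t) = (1 / (2 * lam) + 1 / (4 * \<beta>)) * (norm a)\<^sup>2"
    unfolding t_def using assms by (simp add: field_simps)
  have t2: "lam / 2 * U - t / 2 * U = lam\<^sup>2 / (2 * (2 * \<beta> + lam)) * U"
    unfolding t_def using assms by (simp add: field_simps power2_eq_square)
  have d: "(1 / (2 * \<gamma>) - 1 / (2 * lam) - 1 / (4 * \<beta>)) * (norm a)\<^sup>2
      = 1 / (2 * \<gamma>) * (norm a)\<^sup>2 - (1 / (2 * lam) + 1 / (4 * \<beta>)) * (norm a)\<^sup>2"
    by (simp add: algebra_simps)
  show ?thesis using y t1 t2 d by argo
qed

lemma W_lower: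
  fixes x0 xs xp ub0 ubs bx0 bxp :: "'a::real_inner"
  assumes "(norm (ub0 - ubs))\<^sup>2 \<le> U0" "norm (bx0 - bxp) \<le> L * norm (x0 - xp)"
    "\<gamma> > 0" "lam > 0" "\<beta> > 0" "L > 0"
  shows "Wf \<gamma> lam L x0 xs xp U0 ub0 ubs bx0 bxp
     \<ge> (1 / (2 * \<gamma>) - L - 1 / (2 * \<beta>) - 1 / (2 * lam)) * (norm (x0 - xs))\<^sup>2 + lam\<^sup>2 / (2 * (2 * \<beta> + lam)) * U0"
proof -
  have E: "1 / (2 * \<gamma>) * (norm (x0 - xs))\<^sup>2 + lam / 2 * U0 - inner (x0 - xs) (ub0 - ubs)
     \<ge> (1 / (2 * \<gamma>) - 1 / (2 * lam) - 1 / (4 * \<beta>)) * (norm (x0 - xs))\<^sup>2 + lam\<^sup>2 / (2 * (2 * \<beta> + lam)) * U0"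
    using E_lower[OF assms(1) assms(4) assms(5)] .
  have P: "inner (bx0 - bxp) (x0 - xs) \<le> L / 2 * (norm (x0 - xp))\<^sup>2 + L / 2 * (norm (x0 - xs))\<^sup>2"
  proof -
    have "inner (bx0 - bxp) (x0 - xs) \<le> norm (bx0 - bxp) * norm (x0 - xs)" by (rule norm_cauchy_schwarz)
    also have "\<dots> \<le> L * norm (x0 - xp) * norm (x0 - xs)" using assms(2) by (simp add: mult_right_mono)
    also have "\<dots> \<le> L / 2 * (norm (x0 - xp))\<^sup>2 + L / 2 * (norm (x0 - xs))\<^sup>2"
    proof -
      have "0 \<le> L / 2 * (norm (x0 - xp) - norm (x0 - xs))\<^sup>2" using assms by simp
      then show ?thesis by (simp add: power2_eq_square algebra_simps)
    qed
    finally show ?thesis .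
  qed
  have c: "(1 / (2 * \<gamma>) - 1 / (2 * lam) - 1 / (4 * \<beta>)) * (norm (x0 - xs))\<^sup>2 - L / 2 * (norm (x0 - xs))\<^sup>2
     \<ge> (1 / (2 * \<gamma>) - L - 1 / (2 * \<beta>) - 1 / (2 * lam)) * (norm (x0 - xs))\<^sup>2"
  proof -
    have "1 / (4 * \<beta>) \<le> 1 / (2 * \<beta>)" using assms by (simp add: divide_simps)
    then have "(1 / (2 * \<gamma>) - 1 / (2 * lam) - 1 / (4 * \<beta>)) - L / 2 \<ge> 1 / (2 * \<gamma>) - L - 1 / (2 * \<beta>) - 1 / (2 * lam)"
      using assms by simp
    then show ?thesis by (metis left_diff_distrib mult_right_mono zero_le_power2)
  qed
  show ?thesis using E P c unfolding Wf_def by linarith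
qed

locale setting =
  fixes A :: "nat \<Rightarrow> 'a::{real_inner,complete_space} \<Rightarrow> 'a set"
    and B C :: "'a \<Rightarrow> 'a"
    and m :: nat and L \<beta> lam \<gamma> :: real and \<omega> :: "nat \<Rightarrow> real"
    and x :: "nat \<Rightarrow> 'a" and x_m1 :: 'a
    and u y :: "nat \<Rightarrow> nat \<Rightarrow> 'a"
  assumes m1: "m \<ge> 1"
    and maxA: "\<forall>i\<in>{1..m}. maximally_monotone (A i)"
    and monoB: "monotone_single B" and Lpos: "L > 0" and lipB: "lipschitz_op L B"
    and bpos: "\<beta> > 0" and cocoC: "cocoercive \<beta> C"
    and zero_ex: "\<exists>z. is_zero_of m A B C z"
    and om: "\<forall>i\<in>{1..m}. 0 < \<omega> i \<and> \<omega> i \<le> 1" and omsum: "(\<Sum>i=1..m. \<omega> i) = 1"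
    and lampos: "lam > 0" and gpos: "\<gamma> > 0" and gbound: "\<gamma> < lam * \<beta> / (\<beta> + lam * (2 * \<beta> * L + 1))"
    and xrec: "\<forall>n. x (Suc n) = (\<Sum>j=1..m. \<omega> j *\<^sub>R
            (x n - \<gamma> *\<^sub>R u j n
                 - \<gamma> *\<^sub>R (2 *\<^sub>R B (x n) - B (if n = 0 then x_m1 else x (n - 1)))
                 - \<gamma> *\<^sub>R C (x n)))"
    and yrec: "\<forall>n. \<forall>i\<in>{1..m}. y i (Suc n) =
            resolvent (scale_op (lam / \<omega> i) (A i)) (2 *\<^sub>R x (Suc n) - x n + lam *\<^sub>R u i n)"
    and urec: "\<forall>n. \<forall>i\<in>{1..m}. u i (Suc n) =
            u i n + (1 / lam) *\<^sub>R (2 *\<^sub>R x (Suc n) - x n - y i (Suc n))"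
begin

definition xp :: "nat \<Rightarrow> 'a" where "xp n = (if n = 0 then x_m1 else x (n - 1))"
definition ub :: "nat \<Rightarrow> 'a" where "ub n = (\<Sum>j=1..m. \<omega> j *\<^sub>R u j n)"
definition sol :: "'a \<Rightarrow> (nat \<Rightarrow> 'a) \<Rightarrow> bool" where
  "sol xs us \<longleftrightarrow> (\<forall>i\<in>{1..m}. \<omega> i *\<^sub>R us i \<in> A i xs) \<and> (\<Sum>i=1..m. \<omega> i *\<^sub>R us i) + B xs + C xs = 0"

lemma omsum': "sum \<omega> {Suc 0..m} = 1" using omsum by simp

lemma om_pos: "i \<in> {1..m} \<Longrightarrow> \<omega> i > 0" using om by auto
lemma om_nonneg: "\<forall>i\<in>{1..m}. 0 \<le> \<omega> i" using om by auto

lemma xstep: "x (Suc n) = x n - \<gamma> *\<^sub>R ub n - \<gamma> *\<^sub>R (2 *\<^sub>R B (x n) - B (xp n)) - \<gamma> *\<^sub>R C (x n)"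
proof -
  define Y where "Y = \<gamma> *\<^sub>R (2 *\<^sub>R B (x n) - B (xp n))"
  have "x (Suc n) = (\<Sum>j=1..m. \<omega> j *\<^sub>R (x n - \<gamma> *\<^sub>R u j n - Y - \<gamma> *\<^sub>R C (x n)))"
    using xrec unfolding Y_def xp_def by simp
  also have "\<dots> = (\<Sum>j=1..m. \<omega> j *\<^sub>R x n) - \<gamma> *\<^sub>R (\<Sum>j=1..m. \<omega> j *\<^sub>R u j n) - (\<Sum>j=1..m. \<omega> j *\<^sub>R Y) - (\<Sum>j=1..m. \<omega> j *\<^sub>R \<gamma> *\<^sub>R C (x n))"
    by (simp add: scaleR_diff_right sum_subtractf scaleR_sum_right mult.commute)
  also have "\<dots> = x n - \<gamma> *\<^sub>R ub n - Y - \<gamma> *\<^sub>R C (x n)"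
    unfolding ub_def by (simp add: scaleR_sum_left[symmetric] omsum' sum_distrib_right[symmetric])
  finally show ?thesis unfolding Y_def .
qed

lemma ystep:
  assumes i: "i \<in> {1..m}"
  shows "\<omega> i *\<^sub>R u i (Suc n) \<in> A i (y i (Suc n))"
    and "y i (Suc n) = 2 *\<^sub>R x (Suc n) - x n + lam *\<^sub>R u i n - lam *\<^sub>R u i (Suc n)"
proof -
  define c where "c = lam / \<omega> i"
  have cpos: "c > 0" unfolding c_def using lampos om_pos[OF i] by simp
  have mm: "maximally_monotone (scale_op c (A i))"
    using scale_maximally_monotone[OF cpos] maxA i by blast
  define z where "z = 2 *\<^sub>R x (Suc n) - x n + lam *\<^sub>R u i n"
  have yd: "y i (Suc n) = resolvent (scale_op c (A i)) z" using yrec i unfolding c_def z_def by blast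
  have r: "z - y i (Suc n) \<in> scale_op c (A i) (y i (Suc n))" unfolding yd by (rule resolvent_in[OF mm])
  have ue: "u i (Suc n) = u i n + (1 / lam) *\<^sub>R (2 *\<^sub>R x (Suc n) - x n - y i (Suc n))" using urec i by blast
  have lu: "lam *\<^sub>R u i (Suc n) = z - y i (Suc n)"
    unfolding ue z_def using lampos by (simp add: scaleR_right_distrib algebra_simps)
  then show "y i (Suc n) = 2 *\<^sub>R x (Suc n) - x n + lam *\<^sub>R u i n - lam *\<^sub>R u i (Suc n)"
    unfolding z_def by (simp add: algebra_simps)
  from r obtain a where a: "a \<in> A i (y i (Suc n))" "z - y i (Suc n) = c *\<^sub>R a"
    unfolding scale_op_def by auto
  have "a = (1 / c) *\<^sub>R (lam *\<^sub>R u i (Suc n))" using a(2) lu cpos by simp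
  also have "\<dots> = \<omega> i *\<^sub>R u i (Suc n)" unfolding c_def using lampos om_pos[OF i] by simp
  finally show "\<omega> i *\<^sub>R u i (Suc n) \<in> A i (y i (Suc n))" using a(1) by simp
qed

lemma sol_exists: "\<exists>xs us. sol xs us"
proof -
  obtain z a where za: "\<forall>i\<in>{1..m}. a i \<in> A i z" "(\<Sum>i=1..m. a i) + B z + C z = 0"
    using zero_ex unfolding is_zero_of_def by blast
  define us where "us = (\<lambda>i. (1 / \<omega> i) *\<^sub>R a i)"
  have e: "\<omega> i *\<^sub>R us i = a i" if "i \<in> {1..m}" for i
    unfolding us_def using om_pos[OF that] by simp
  have "(\<Sum>i=1..m. \<omega> i *\<^sub>R us i) = (\<Sum>i=1..m. a i)" by (rule sum.cong) (auto simp: e)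
  then have "sol z us" unfolding sol_def using za e by simp
  then show ?thesis by blast
qed

lemma sol_zero: "sol xs us \<Longrightarrow> is_zero_of m A B C xs"
  unfolding sol_def is_zero_of_def by (intro exI[of _ "\<lambda>i. \<omega> i *\<^sub>R us i"]) simp

definition ubs :: "(nat \<Rightarrow> 'a) \<Rightarrow> 'a" where "ubs us = (\<Sum>i=1..m. \<omega> i *\<^sub>R us i)"
definition Uu :: "(nat \<Rightarrow> 'a) \<Rightarrow> nat \<Rightarrow> real" where "Uu us n = (\<Sum>i=1..m. \<omega> i * (norm (u i n - us i))\<^sup>2)"
definition Dn :: "nat \<Rightarrow> real" where "Dn n = (\<Sum>i=1..m. \<omega> i * (norm (u i (Suc n) - u i n))\<^sup>2)"
definition Wn :: "'a \<Rightarrow> (nat \<Rightarrow> 'a) \<Rightarrow> nat \<Rightarrow> real" where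
  "Wn xs us n = Wf \<gamma> lam L (x n) xs (xp n) (Uu us n) (ub n) (ubs us) (B (x n)) (B (xp n))"
definition \<kappa> :: real where "\<kappa> = 1 / (2 * \<gamma>) - L - 1 / (2 * \<beta>) - 1 / (2 * lam)"
definition \<kappa>' :: real where "\<kappa>' = lam\<^sup>2 / (2 * (2 * \<beta> + lam))"

lemma kappa_pos: "\<kappa> > 0"
proof -
  have den: "\<beta> + lam * (2 * \<beta> * L + 1) > 0" using bpos lampos Lpos by (simp add: add_pos_pos)
  have "\<gamma> * (\<beta> + lam * (2 * \<beta> * L + 1)) < lam * \<beta>" using gbound den by (simp add: pos_less_divide_eq)
  then have "0 < lam * \<beta> - \<gamma> * (\<beta> + lam * (2 * \<beta> * L + 1))" by simp
  also have "lam * \<beta> - \<gamma> * (\<beta> + lam * (2 * \<beta> * L + 1)) = \<kappa> * (2 * \<gamma> * lam * \<beta>)"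
    unfolding \<kappa>_def using gpos lampos bpos by (simp add: field_simps)
  finally have X: "0 < \<kappa> * (2 * \<gamma> * lam * \<beta>)" .
  have P: "0 < 2 * \<gamma> * lam * \<beta>" using gpos lampos bpos by simp
  show ?thesis
  proof (rule ccontr)
    assume "\<not> \<kappa> > 0"
    then have "\<kappa> * (2 * \<gamma> * lam * \<beta>) \<le> 0" using P by (intro mult_nonpos_nonneg) auto
    then show False using X by simp
  qed
qed

lemma kappa'_pos: "\<kappa>' > 0" unfolding \<kappa>'_def using lampos bpos by simp

lemma monoA: "i \<in> {1..m} \<Longrightarrow> monotone_op (A i)" using maxA unfolding maximally_monotone_def by blast

lemma xp_Suc: "xp (Suc n) = x n" unfolding xp_def by simp

lemma jensen_m: fixes v :: "nat \<Rightarrow> 'a" shows "(norm (\<Sum>i=1..m. \<omega> i *\<^sub>R v i))\<^sup>2 \<le> (\<Sum>i=1..m. \<omega> i * (norm (v i))\<^sup>2)"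
  using jensen_norm[of "{1..m}" \<omega> v] om_nonneg omsum by simp

lemma W_step:
  assumes "sol xs us"
  shows "Wn xs us n - Wn xs us (Suc n) \<ge> \<kappa> * (norm (x (Suc n) - x n))\<^sup>2 + \<kappa>' * Dn n"
proof -
  have solA: "\<omega> i *\<^sub>R us i \<in> A i xs" if "i \<in> {1..m}" for i using assms that unfolding sol_def by blast
  have solS: "ubs us + B xs + C xs = 0" using assms unfolding sol_def ubs_def by blast
  define v where "v = 2 *\<^sub>R x (Suc n) - x n - xs"
  have trm: "\<omega> i * inner (y i (Suc n) - xs) (u i (Suc n) - us i)
     = inner v (\<omega> i *\<^sub>R (u i (Suc n) - us i)) + lam / 2 * (\<omega> i * (norm (u i n - us i))\<^sup>2
        - \<omega> i * (norm (u i (Suc n) - us i))\<^sup>2 - \<omega> i * (norm (u i (Suc n) - u i n))\<^sup>2)"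
    if i: "i \<in> {1..m}" for i
  proof -
    define a where "a = u i n - us i"
    define b where "b = u i (Suc n) - us i"
    have ye: "y i (Suc n) - xs = v + lam *\<^sub>R (a - b)"
      unfolding ystep(2)[OF i] v_def a_def b_def by (simp add: algebra_simps)
    have ba: "u i (Suc n) - u i n = b - a" unfolding a_def b_def by simp
    have eq: "inner (a - b) b = ((norm a)\<^sup>2 - (norm b)\<^sup>2 - (norm (b - a))\<^sup>2) / 2"
      by (simp add: power2_norm_eq_inner inner_diff_left inner_diff_right inner_commute algebra_simps)
    have L: "\<omega> i * inner (v + lam *\<^sub>R (a - b)) b = \<omega> i * inner v b + lam * \<omega> i * inner (a - b) b"
      by (simp add: inner_add_left algebra_simps)
    have R: "inner v (\<omega> i *\<^sub>R b) + lam / 2 * (\<omega> i * (norm a)\<^sup>2 - \<omega> i * (norm b)\<^sup>2 - \<omega> i * (norm (b - a))\<^sup>2)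
        = \<omega> i * inner v b + lam * \<omega> i * (((norm a)\<^sup>2 - (norm b)\<^sup>2 - (norm (b - a))\<^sup>2) / 2)"
      by (simp add: field_simps)
    show ?thesis unfolding ye ba a_def[symmetric] b_def[symmetric] L R eq ..
  qed
  have nonneg: "\<omega> i * inner (y i (Suc n) - xs) (u i (Suc n) - us i) \<ge> 0" if i: "i \<in> {1..m}" for i
  proof -
    have "inner (y i (Suc n) - xs) (\<omega> i *\<^sub>R u i (Suc n) - \<omega> i *\<^sub>R us i) \<ge> 0"
      using monoA[OF i] ystep(1)[OF i] solA[OF i] unfolding monotone_op_def by blast
    then show ?thesis by (simp add: scaleR_diff_right[symmetric])
  qed
  have sumv: "(\<Sum>i=1..m. inner v (\<omega> i *\<^sub>R (u i (Suc n) - us i))) = inner v (ub (Suc n) - ubs us)"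
    unfolding ub_def ubs_def by (simp add: inner_sum_right[symmetric] scaleR_diff_right sum_subtractf)
  have "0 \<le> (\<Sum>i=1..m. \<omega> i * inner (y i (Suc n) - xs) (u i (Suc n) - us i))"
    using nonneg by (intro sum_nonneg) auto
  also have "\<dots> = (\<Sum>i=1..m. inner v (\<omega> i *\<^sub>R (u i (Suc n) - us i)) + lam / 2 * (\<omega> i * (norm (u i n - us i))\<^sup>2
        - \<omega> i * (norm (u i (Suc n) - us i))\<^sup>2 - \<omega> i * (norm (u i (Suc n) - u i n))\<^sup>2))"
    using trm by (intro sum.cong) auto
  also have "\<dots> = (\<Sum>i=1..m. inner v (\<omega> i *\<^sub>R (u i (Suc n) - us i))) + lam / 2 * ((\<Sum>i=1..m. \<omega> i * (norm (u i n - us i))\<^sup>2)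
        - (\<Sum>i=1..m. \<omega> i * (norm (u i (Suc n) - us i))\<^sup>2) - (\<Sum>i=1..m. \<omega> i * (norm (u i (Suc n) - u i n))\<^sup>2))"
    by (simp only: sum.distrib sum_distrib_left[symmetric] sum_subtractf)
  also have "\<dots> = inner v (ub (Suc n) - ubs us) + lam / 2 * (Uu us n - Uu us (Suc n) - Dn n)"
    unfolding sumv Uu_def Dn_def ..
  finally have H3: "inner (2 *\<^sub>R x (Suc n) - x n - xs) (ub (Suc n) - ubs us) + lam / 2 * (Uu us n - Uu us (Suc n) - Dn n) \<ge> 0"
    unfolding v_def .
  have H4: "inner (x (Suc n) - xs) (B (x (Suc n)) - B xs) \<ge> 0" using monoB unfolding monotone_single_def by blast
  have H5: "norm (B (x n) - B (xp n)) \<le> L * norm (x n - xp n)" using lipB unfolding lipschitz_op_def by blast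
  have H6: "inner (x n - xs) (C (x n) - C xs) \<ge> \<beta> * (norm (C (x n) - C xs))\<^sup>2" using cocoC unfolding cocoercive_def by blast
  have H7: "(norm (ub (Suc n) - ub n))\<^sup>2 \<le> Dn n"
  proof -
    have "ub (Suc n) - ub n = (\<Sum>i=1..m. \<omega> i *\<^sub>R (u i (Suc n) - u i n))"
      unfolding ub_def by (simp add: scaleR_diff_right sum_subtractf)
    then show ?thesis unfolding Dn_def using jensen_m by simp
  qed
  have "Wf \<gamma> lam L (x n) xs (xp n) (Uu us n) (ub n) (ubs us) (B (x n)) (B (xp n))
      - Wf \<gamma> lam L (x (Suc n)) xs (x n) (Uu us (Suc n)) (ub (Suc n)) (ubs us) (B (x (Suc n))) (B (x n))
     \<ge> (1 / (2 * \<gamma>) - L - 1 / (2 * \<beta>) - 1 / (2 * lam)) * (norm (x (Suc n) - x n))\<^sup>2 + lam\<^sup>2 / (2 * (2 * \<beta> + lam)) * Dn n"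
    by (rule step_ineq[OF xstep solS H3 H4 H5 H6 H7 gpos lampos bpos Lpos])
  then show ?thesis unfolding Wn_def xp_Suc \<kappa>_def \<kappa>'_def .
qed

lemma W_low:
  assumes "sol xs us"
  shows "Wn xs us n \<ge> \<kappa> * (norm (x n - xs))\<^sup>2 + \<kappa>' * Uu us n"
proof -
  have J: "(norm (ub n - ubs us))\<^sup>2 \<le> Uu us n"
  proof -
    have "ub n - ubs us = (\<Sum>i=1..m. \<omega> i *\<^sub>R (u i n - us i))"
      unfolding ub_def ubs_def by (simp add: scaleR_diff_right sum_subtractf)
    then show ?thesis unfolding Uu_def using jensen_m by simp
  qed
  have H5: "norm (B (x n) - B (xp n)) \<le> L * norm (x n - xp n)" using lipB unfolding lipschitz_op_def by blast
  show ?thesis unfolding Wn_def \<kappa>_def \<kappa>'_def by (rule W_lower[OF J H5 gpos lampos bpos Lpos])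
qed

end

lemma bdd_from_sq:
  fixes f :: "nat \<Rightarrow> 'a::real_normed_vector"
  assumes "\<And>n. c * (norm (f n - a))\<^sup>2 \<le> K" "c > 0"
  shows "\<exists>M. \<forall>n. norm (f n) \<le> M"
proof -
  have "norm (f n - a) \<le> max 1 (K / c)" for n
  proof (cases "norm (f n - a) \<le> 1")
    case False
    then have "norm (f n - a) \<le> (norm (f n - a))\<^sup>2"
      using mult_left_mono[of 1 "norm (f n - a)" "norm (f n - a)"] by (simp add: power2_eq_square)
    also have "\<dots> \<le> K / c" using assms(1)[of n] assms(2) by (simp add: pos_le_divide_eq mult.commute)
    finally show ?thesis by simp
  qed simp
  then have "norm (f n) \<le> norm a + max 1 (K / c)" for n
    using norm_triangle_ineq2[of "f n" a] by (smt (verit))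
  then show ?thesis by blast
qed

lemma sq_null:
  fixes f :: "nat \<Rightarrow> 'a::real_normed_vector"
  assumes "\<And>n. c * (norm (f n))\<^sup>2 \<le> g n" "g \<longlonglongrightarrow> 0" "c > 0"
  shows "f \<longlonglongrightarrow> 0"
proof -
  have "(\<lambda>n. (norm (f n))\<^sup>2) \<longlonglongrightarrow> 0"
  proof (rule tendsto_sandwich[of "\<lambda>n. 0" _ _ "\<lambda>n. g n / c"])
    show "\<forall>\<^sub>F n in sequentially. 0 \<le> (norm (f n))\<^sup>2" by simp
    show "\<forall>\<^sub>F n in sequentially. (norm (f n))\<^sup>2 \<le> g n / c"
      using assms by (intro always_eventually allI) (simp add: pos_le_divide_eq mult.commute)
    show "(\<lambda>n. g n / c) \<longlonglongrightarrow> 0" using tendsto_divide[OF assms(2) tendsto_const, of c] assms(3) by simp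
  qed simp
  then have "(\<lambda>n. sqrt ((norm (f n))\<^sup>2)) \<longlonglongrightarrow> sqrt 0" by (intro tendsto_intros)
  then have "(\<lambda>n. norm (f n)) \<longlonglongrightarrow> 0" by simp
  then show ?thesis by (simp add: tendsto_norm_zero_iff)
qed

context setting begin

lemma W_dec: "sol xs us \<Longrightarrow> Wn xs us (Suc n) \<le> Wn xs us n"
  using W_step[of xs us n] kappa_pos kappa'_pos
  by (smt (verit) Dn_def mult_nonneg_nonneg om_nonneg sum_nonneg zero_le_power2)

lemma Uu_nonneg: "Uu us n \<ge> 0" unfolding Uu_def using om_nonneg by (intro sum_nonneg) auto
lemma Dn_nonneg: "Dn n \<ge> 0" unfolding Dn_def using om_nonneg by (intro sum_nonneg) auto

lemma W_nonneg: "sol xs us \<Longrightarrow> Wn xs us n \<ge> 0"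
  using W_low[of xs us n] kappa_pos kappa'_pos Uu_nonneg[of us n]
  by (smt (verit) mult_nonneg_nonneg zero_le_power2)

lemma W_le0: "sol xs us \<Longrightarrow> Wn xs us n \<le> Wn xs us 0"
  by (induction n) (use W_dec order_trans in blast)+

lemma W_conv: "sol xs us \<Longrightarrow> \<exists>l. Wn xs us \<longlonglongrightarrow> l"
proof -
  assume s: "sol xs us"
  have "decseq (Wn xs us)" using W_dec[OF s] by (simp add: decseq_SucI)
  then obtain l where "Wn xs us \<longlonglongrightarrow> l" using decseq_convergent[of "Wn xs us" 0] W_nonneg[OF s] by blast
  then show ?thesis by blast
qed

lemma W_diff0: "sol xs us \<Longrightarrow> (\<lambda>n. Wn xs us n - Wn xs us (Suc n)) \<longlonglongrightarrow> 0"
proof -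
  assume s: "sol xs us"
  obtain l where l: "Wn xs us \<longlonglongrightarrow> l" using W_conv[OF s] by blast
  have "(\<lambda>n. Wn xs us n - Wn xs us (Suc n)) \<longlonglongrightarrow> l - l" by (intro tendsto_diff l LIMSEQ_Suc)
  then show ?thesis by simp
qed

lemma dx0: "(\<lambda>n. x (Suc n) - x n) \<longlonglongrightarrow> 0"
proof -
  obtain xs us where s: "sol xs us" using sol_exists by blast
  show ?thesis
  proof (rule sq_null[OF _ W_diff0[OF s] kappa_pos])
    fix n show "\<kappa> * (norm (x (Suc n) - x n))\<^sup>2 \<le> Wn xs us n - Wn xs us (Suc n)"
      using W_step[OF s, of n] kappa'_pos Dn_nonneg[of n] by (smt (verit) mult_nonneg_nonneg)
  qed
qed

lemma du0: "i \<in> {1..m} \<Longrightarrow> (\<lambda>n. u i (Suc n) - u i n) \<longlonglongrightarrow> 0"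
proof -
  assume i: "i \<in> {1..m}"
  obtain xs us where s: "sol xs us" using sol_exists by blast
  show ?thesis
  proof (rule sq_null[OF _ W_diff0[OF s]])
    show "\<kappa>' * \<omega> i > 0" using kappa'_pos om_pos[OF i] by simp
    fix n
    have "\<omega> i * (norm (u i (Suc n) - u i n))\<^sup>2 \<le> Dn n"
      unfolding Dn_def using i om_nonneg by (intro member_le_sum) auto
    then have "\<kappa>' * (\<omega> i * (norm (u i (Suc n) - u i n))\<^sup>2) \<le> \<kappa>' * Dn n"
      using kappa'_pos by (intro mult_left_mono) auto
    then show "\<kappa>' * \<omega> i * (norm (u i (Suc n) - u i n))\<^sup>2 \<le> Wn xs us n - Wn xs us (Suc n)"
      using W_step[OF s, of n] kappa_pos by (smt (verit) mult.assoc mult_nonneg_nonneg zero_le_power2)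
  qed
qed

lemma x_bdd: "\<exists>M. \<forall>n. norm (x n) \<le> M"
proof -
  obtain xs us where s: "sol xs us" using sol_exists by blast
  show ?thesis
  proof (rule bdd_from_sq[OF _ kappa_pos])
    fix n show "\<kappa> * (norm (x n - xs))\<^sup>2 \<le> Wn xs us 0"
      using W_low[OF s, of n] W_le0[OF s, of n] kappa'_pos Uu_nonneg[of us n] by (smt (verit) mult_nonneg_nonneg)
  qed
qed

lemma u_bdd: "i \<in> {1..m} \<Longrightarrow> \<exists>M. \<forall>n. norm (u i n) \<le> M"
proof -
  assume i: "i \<in> {1..m}"
  obtain xs us where s: "sol xs us" using sol_exists by blast
  show ?thesis
  proof (rule bdd_from_sq)
    show "\<kappa>' * \<omega> i > 0" using kappa'_pos om_pos[OF i] by simp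
    fix n
    have "\<omega> i * (norm (u i n - us i))\<^sup>2 \<le> Uu us n"
      unfolding Uu_def using i om_nonneg by (intro member_le_sum) auto
    then have "\<kappa>' * (\<omega> i * (norm (u i n - us i))\<^sup>2) \<le> \<kappa>' * Uu us n"
      using kappa'_pos by (intro mult_left_mono) auto
    then show "\<kappa>' * \<omega> i * (norm (u i n - us i))\<^sup>2 \<le> Wn xs us 0"
      using W_low[OF s, of n] W_le0[OF s, of n] kappa_pos by (smt (verit) mult.assoc mult_nonneg_nonneg zero_le_power2)
  qed
qed

lemma xxp0: "(\<lambda>n. x n - xp n) \<longlonglongrightarrow> 0"
  by (rule LIMSEQ_imp_Suc) (simp add: xp_Suc dx0)

end

lemma weak_inner: "weakly_converges s l \<Longrightarrow> (\<lambda>n. inner (s n) w) \<longlonglongrightarrow> inner l w"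
  unfolding weakly_converges_def by blast

lemma weak_inner': "weakly_converges s l \<Longrightarrow> (\<lambda>n. inner w (s n)) \<longlonglongrightarrow> inner w l"
  using weak_inner[of s l w] unfolding inner_commute[of w] .

lemma weak_subseq: "weakly_converges s l \<Longrightarrow> strict_mono r \<Longrightarrow> weakly_converges (s \<circ> r) l"
  unfolding weakly_converges_def using LIMSEQ_subseq_LIMSEQ by (fastforce simp: o_def)

lemma inner_null:
  fixes a b :: "nat \<Rightarrow> 'a::real_inner"
  assumes "a \<longlonglongrightarrow> 0" "\<And>n. norm (b n) \<le> M"
  shows "(\<lambda>n. inner (a n) (b n)) \<longlonglongrightarrow> 0"
proof -
  have M0: "M \<ge> 0" using assms(2)[of 0] norm_ge_zero order_trans by blast
  have na: "(\<lambda>n. norm (a n) * M) \<longlonglongrightarrow> 0 * M" using assms(1) by (intro tendsto_intros) (simp add: tendsto_norm_zero_iff)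
  have le: "\<bar>inner (a n) (b n)\<bar> \<le> norm (a n) * M" for n
    using Cauchy_Schwarz_ineq2[of "a n" "b n"] assms(2)[of n] by (meson mult_left_mono norm_ge_zero order_trans)
  have "(\<lambda>n. \<bar>inner (a n) (b n)\<bar>) \<longlonglongrightarrow> 0"
    by (rule tendsto_sandwich[of "\<lambda>n. 0" _ _ "\<lambda>n. norm (a n) * M", OF _ _ tendsto_const]) (use na le in auto)
  then show ?thesis by (simp add: tendsto_rabs_zero_iff)
qed

lemma weak_perturb:
  assumes "weakly_converges s l" "(\<lambda>n. t n - s n) \<longlonglongrightarrow> 0"
  shows "weakly_converges t l"
  unfolding weakly_converges_def
proof
  fix w
  have "(\<lambda>n. inner (t n - s n) w) \<longlonglongrightarrow> 0"
    using inner_null[OF assms(2), of "\<lambda>n. w" "norm w"] by simp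
  then have "(\<lambda>n. inner (s n) w + inner (t n - s n) w) \<longlonglongrightarrow> inner l w + 0"
    by (intro tendsto_add weak_inner[OF assms(1)])
  then show "(\<lambda>n. inner (t n) w) \<longlonglongrightarrow> inner l w" by (simp add: inner_diff_left)
qed

context setting begin

definition Dop :: "'a \<Rightarrow> 'a" where "Dop z = B z + C z"

lemma C_lip: "norm (C a - C b) \<le> (1 / \<beta>) * norm (a - b)"
proof -
  have "\<beta> * (norm (C a - C b))\<^sup>2 \<le> inner (a - b) (C a - C b)" using cocoC unfolding cocoercive_def by blast
  also have "\<dots> \<le> norm (a - b) * norm (C a - C b)" by (rule norm_cauchy_schwarz)
  finally have h: "\<beta> * (norm (C a - C b))\<^sup>2 \<le> norm (a - b) * norm (C a - C b)" .
  show ?thesis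
  proof (cases "norm (C a - C b) = 0")
    case False
    then have cpos: "norm (C a - C b) > 0" by simp
    have "(\<beta> * norm (C a - C b)) * norm (C a - C b) \<le> norm (a - b) * norm (C a - C b)"
      using h by (simp add: power2_eq_square mult.assoc)
    then have "\<beta> * norm (C a - C b) \<le> norm (a - b)" using cpos by (rule mult_right_le_imp_le)
    then show ?thesis using bpos by (simp add: field_simps mult.commute)
  qed (use bpos in simp)
qed

lemma D_lip: "norm (Dop a - Dop b) \<le> (L + 1 / \<beta>) * norm (a - b)"
proof -
  have "norm (Dop a - Dop b) \<le> norm (B a - B b) + norm (C a - C b)"
    unfolding Dop_def by (metis add_diff_add norm_triangle_ineq)
  also have "\<dots> \<le> L * norm (a - b) + (1 / \<beta>) * norm (a - b)"
    using lipB C_lip unfolding lipschitz_op_def by (intro add_mono) auto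
  finally show ?thesis by (simp add: algebra_simps)
qed

lemma D_mono: "inner (a - b) (Dop a - Dop b) \<ge> 0"
proof -
  have "inner (a - b) (B a - B b) \<ge> 0" using monoB unfolding monotone_single_def by blast
  moreover have "inner (a - b) (C a - C b) \<ge> 0"
  proof -
    have "\<beta> * (norm (C a - C b))\<^sup>2 \<le> inner (a - b) (C a - C b)" using cocoC unfolding cocoercive_def by blast
    moreover have "0 \<le> \<beta> * (norm (C a - C b))\<^sup>2" using bpos by simp
    ultimately show ?thesis by linarith
  qed
  ultimately show ?thesis unfolding Dop_def by (simp add: inner_diff_right inner_add_right algebra_simps)
qed

lemma res0: "(\<lambda>n. ub n + Dop (x n)) \<longlonglongrightarrow> 0"
proof -
  have e: "ub n + Dop (x n) = - ((1 / \<gamma>) *\<^sub>R (x (Suc n) - x n)) - (B (x n) - B (xp n))" for n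
  proof -
    have s1: "x (Suc n) - x n = - (\<gamma> *\<^sub>R (ub n + (2 *\<^sub>R B (x n) - B (xp n)) + C (x n)))"
      using xstep[of n] by (simp add: scaleR_right_distrib)
    have s2: "ub n + (2 *\<^sub>R B (x n) - B (xp n)) + C (x n) = ub n + Dop (x n) + (B (x n) - B (xp n))"
      unfolding Dop_def by (simp add: scaleR_2)
    have "x (Suc n) - x n = - (\<gamma> *\<^sub>R (ub n + Dop (x n) + (B (x n) - B (xp n))))"
      using s1 s2 by simp
    then have "(1 / \<gamma>) *\<^sub>R (x (Suc n) - x n) = - (ub n + Dop (x n) + (B (x n) - B (xp n)))"
      using gpos by simp
    then show ?thesis by (simp add: algebra_simps)
  qed
  have b0: "(\<lambda>n. B (x n) - B (xp n)) \<longlonglongrightarrow> 0"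
  proof -
    have "(\<lambda>n. L * norm (x n - xp n)) \<longlonglongrightarrow> L * 0"
      using xxp0 by (intro tendsto_mult tendsto_const) (simp add: tendsto_norm_zero_iff)
    then have up: "(\<lambda>n. L * norm (x n - xp n)) \<longlonglongrightarrow> 0" by simp
    have le: "norm (B (x n) - B (xp n)) \<le> L * norm (x n - xp n)" for n using lipB unfolding lipschitz_op_def by blast
    have "(\<lambda>n. norm (B (x n) - B (xp n))) \<longlonglongrightarrow> 0"
      by (rule tendsto_sandwich[of "\<lambda>n. 0" _ _ "\<lambda>n. L * norm (x n - xp n)", OF _ _ tendsto_const up])
        (simp_all add: le)
    then show ?thesis by (simp add: tendsto_norm_zero_iff)
  qed
  have "(\<lambda>n. (1 / \<gamma>) *\<^sub>R (x (Suc n) - x n)) \<longlonglongrightarrow> (1 / \<gamma>) *\<^sub>R 0" by (rule tendsto_scaleR[OF tendsto_const dx0])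
  from tendsto_diff[OF tendsto_minus[OF this] b0]
  have "(\<lambda>n. - ((1 / \<gamma>) *\<^sub>R (x (Suc n) - x n)) - (B (x n) - B (xp n))) \<longlonglongrightarrow> - ((1 / \<gamma>) *\<^sub>R 0) - 0" .
  then show ?thesis unfolding e by simp
qed

lemma u_bdd_all: "\<exists>M. \<forall>i\<in>{1..m}. \<forall>n. norm (u i n) \<le> M"
proof -
  from u_bdd have "\<forall>i\<in>{1..m}. \<exists>M. \<forall>n. norm (u i n) \<le> M" by blast
  then obtain Mi where Mi: "\<forall>i\<in>{1..m}. \<forall>n. norm (u i n) \<le> Mi i" by metis
  have "norm (u i n) \<le> (\<Sum>j=1..m. max 0 (Mi j))" if "i \<in> {1..m}" for i n
  proof -
    have "norm (u i n) \<le> max 0 (Mi i)" using Mi that by (meson max.cobounded2 order_trans)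
    also have "\<dots> \<le> (\<Sum>j=1..m. max 0 (Mi j))" using that by (intro member_le_sum) auto
    finally show ?thesis .
  qed
  then show ?thesis by blast
qed

end

context setting begin

lemma cluster_ineq:
  assumes r: "strict_mono r" and wx: "weakly_converges (\<lambda>k. x (r k)) xb"
    and wu: "\<forall>i\<in>{1..m}. weakly_converges (\<lambda>k. u i (r k)) (ubar i)"
    and pq: "\<forall>i\<in>{1..m}. q i \<in> A i (p i)"
  shows "(\<Sum>i=1..m. inner (xb - p i) (\<omega> i *\<^sub>R ubar i - q i)) + inner (xb - s) (- (\<Sum>i=1..m. \<omega> i *\<^sub>R ubar i) - Dop s) \<ge> 0"
proof -
  define N where "N = (\<lambda>k. Suc (r k))"
  have Nmono: "strict_mono N" using r unfolding N_def strict_mono_def by simp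
  have dxr: "(\<lambda>k. x (N k) - x (r k)) \<longlonglongrightarrow> 0"
    using LIMSEQ_subseq_LIMSEQ[OF dx0 r] unfolding N_def o_def .
  have dur: "(\<lambda>k. u i (N k) - u i (r k)) \<longlonglongrightarrow> 0" if "i \<in> {1..m}" for i
    using LIMSEQ_subseq_LIMSEQ[OF du0[OF that] r] unfolding N_def o_def .
  have wxN: "weakly_converges (\<lambda>k. x (N k)) xb" by (rule weak_perturb[OF wx dxr])
  have wuN: "weakly_converges (\<lambda>k. u i (N k)) (ubar i)" if "i \<in> {1..m}" for i
    using wu that dur by (blast intro: weak_perturb)
  obtain Mx where Mx: "\<forall>n. norm (x n) \<le> Mx" using x_bdd by blast
  obtain Mu where Mu: "\<forall>i\<in>{1..m}. \<forall>n. norm (u i n) \<le> Mu" using u_bdd_all by blast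
  define e where "e = (\<lambda>i k. y i (N k) - x (N k))"
  have e0: "(\<lambda>k. e i k) \<longlonglongrightarrow> 0" if i: "i \<in> {1..m}" for i
  proof -
    have "e i k = (x (N k) - x (r k)) - lam *\<^sub>R (u i (N k) - u i (r k))" for k
      unfolding e_def N_def ystep(2)[OF i] by (simp add: algebra_simps scaleR_2)
    moreover have "(\<lambda>k. (x (N k) - x (r k)) - lam *\<^sub>R (u i (N k) - u i (r k))) \<longlonglongrightarrow> 0 - lam *\<^sub>R 0"
      by (rule tendsto_diff[OF dxr tendsto_scaleR[OF tendsto_const dur[OF i]]])
    ultimately show ?thesis by simp
  qed
  define rr where "rr = (\<lambda>k. ub (N k) + Dop (x (N k)))"
  have rr0: "rr \<longlonglongrightarrow> 0" using LIMSEQ_subseq_LIMSEQ[OF res0 Nmono] unfolding rr_def o_def .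
  define T where "T = (\<lambda>k. (\<Sum>i=1..m. inner (y i (N k) - p i) (\<omega> i *\<^sub>R u i (N k) - q i)) + inner (x (N k) - s) (Dop (x (N k)) - Dop s))"
  have T0: "T k \<ge> 0" for k
  proof -
    have "inner (y i (N k) - p i) (\<omega> i *\<^sub>R u i (N k) - q i) \<ge> 0" if i: "i \<in> {1..m}" for i
      using monoA[OF i] ystep(1)[OF i, of "r k"] pq i unfolding monotone_op_def N_def by blast
    then have "(\<Sum>i=1..m. inner (y i (N k) - p i) (\<omega> i *\<^sub>R u i (N k) - q i)) \<ge> 0" by (intro sum_nonneg) auto
    then show ?thesis unfolding T_def using D_mono by (simp add: add_nonneg_nonneg)
  qed
  define aff where "aff = (\<lambda>k. - (\<Sum>i=1..m. inner (x (N k)) (q i)) - (\<Sum>i=1..m. \<omega> i * inner (p i) (u i (N k)))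
      + (\<Sum>i=1..m. inner (p i) (q i)) - inner (x (N k)) (Dop s) + (\<Sum>i=1..m. \<omega> i * inner s (u i (N k))) + inner s (Dop s))"
  define err where "err = (\<lambda>k. (\<Sum>i=1..m. inner (e i k) (\<omega> i *\<^sub>R u i (N k) - q i)) + inner (rr k) (x (N k) - s))"
  have Teq: "T k = aff k + err k" for k
  proof -
    have trm: "inner (y i (N k) - p i) (\<omega> i *\<^sub>R u i (N k) - q i)
       = inner (x (N k)) (\<omega> i *\<^sub>R u i (N k)) - inner (x (N k)) (q i) - \<omega> i * inner (p i) (u i (N k)) + inner (p i) (q i)
         + inner (e i k) (\<omega> i *\<^sub>R u i (N k) - q i)" for i
    proof -
      have "y i (N k) = x (N k) + e i k" unfolding e_def by simp
      then show ?thesis by (simp add: inner_add_left inner_diff_left inner_diff_right algebra_simps)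
    qed
    have s1: "(\<Sum>i=1..m. inner (y i (N k) - p i) (\<omega> i *\<^sub>R u i (N k) - q i))
       = (\<Sum>i=1..m. inner (x (N k)) (\<omega> i *\<^sub>R u i (N k))) - (\<Sum>i=1..m. inner (x (N k)) (q i)) - (\<Sum>i=1..m. \<omega> i * inner (p i) (u i (N k)))
         + (\<Sum>i=1..m. inner (p i) (q i)) + (\<Sum>i=1..m. inner (e i k) (\<omega> i *\<^sub>R u i (N k) - q i))"
      unfolding trm by (simp only: sum.distrib sum_subtractf)
    have s2: "(\<Sum>i=1..m. inner (x (N k)) (\<omega> i *\<^sub>R u i (N k))) = inner (x (N k)) (ub (N k))"
      unfolding ub_def by (simp add: inner_sum_right)
    have s3: "inner s (ub (N k)) = (\<Sum>i=1..m. \<omega> i * inner s (u i (N k)))"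
      unfolding ub_def by (simp add: inner_sum_right)
    have dx: "Dop (x (N k)) = rr k - ub (N k)" unfolding rr_def by simp
    have s4: "inner (x (N k) - s) (Dop (x (N k)) - Dop s) = inner (rr k) (x (N k) - s) - inner (x (N k)) (ub (N k))
       + inner s (ub (N k)) - inner (x (N k)) (Dop s) + inner s (Dop s)"
      unfolding dx by (simp add: inner_diff_left inner_diff_right inner_commute algebra_simps)
    show ?thesis unfolding T_def aff_def err_def s1 s2 s4 s3 by simp
  qed
  define affl where "affl = - (\<Sum>i=1..m. inner xb (q i)) - (\<Sum>i=1..m. \<omega> i * inner (p i) (ubar i))
      + (\<Sum>i=1..m. inner (p i) (q i)) - inner xb (Dop s) + (\<Sum>i=1..m. \<omega> i * inner s (ubar i)) + inner s (Dop s)"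
  have aff_lim: "aff \<longlonglongrightarrow> affl"
    unfolding aff_def affl_def
    by (intro tendsto_add tendsto_diff tendsto_minus tendsto_sum tendsto_mult tendsto_const
        weak_inner[OF wxN] weak_inner'[OF wuN]) auto
  have err_lim: "err \<longlonglongrightarrow> 0"
  proof -
    have "(\<lambda>k. \<Sum>i=1..m. inner (e i k) (\<omega> i *\<^sub>R u i (N k) - q i)) \<longlonglongrightarrow> (\<Sum>i=1..m. 0)"
    proof (rule tendsto_sum)
      fix i assume i: "i \<in> {1..m}"
      have "norm (\<omega> i *\<^sub>R u i (N k) - q i) \<le> \<bar>\<omega> i\<bar> * Mu + norm (q i)" for k
      proof -
        have "norm (\<omega> i *\<^sub>R u i (N k) - q i) \<le> norm (\<omega> i *\<^sub>R u i (N k)) + norm (q i)" by (rule norm_triangle_ineq4)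
        also have "norm (\<omega> i *\<^sub>R u i (N k)) \<le> \<bar>\<omega> i\<bar> * Mu" using Mu i by (simp add: mult_left_mono)
        finally show ?thesis by simp
      qed
      then show "(\<lambda>k. inner (e i k) (\<omega> i *\<^sub>R u i (N k) - q i)) \<longlonglongrightarrow> 0" by (rule inner_null[OF e0[OF i]])
    qed
    moreover have "(\<lambda>k. inner (rr k) (x (N k) - s)) \<longlonglongrightarrow> 0"
    proof (rule inner_null[OF rr0])
      fix k show "norm (x (N k) - s) \<le> Mx + norm s" using Mx by (meson add_mono norm_triangle_ineq4 order_trans order_refl)
    qed
    ultimately show ?thesis unfolding err_def using tendsto_add by fastforce
  qed
  have "T \<longlonglongrightarrow> affl + 0" unfolding Teq[abs_def] by (intro tendsto_add aff_lim err_lim)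
  then have "affl \<ge> 0" using T0 by (intro LIMSEQ_le_const[of T]) auto
  moreover have "(\<Sum>i=1..m. inner (xb - p i) (\<omega> i *\<^sub>R ubar i - q i)) + inner (xb - s) (- (\<Sum>i=1..m. \<omega> i *\<^sub>R ubar i) - Dop s) = affl"
  proof -
    have g1: "(\<Sum>i=1..m. inner (xb - p i) (\<omega> i *\<^sub>R ubar i - q i))
       = (\<Sum>i=1..m. inner xb (\<omega> i *\<^sub>R ubar i)) - (\<Sum>i=1..m. inner xb (q i)) - (\<Sum>i=1..m. \<omega> i * inner (p i) (ubar i)) + (\<Sum>i=1..m. inner (p i) (q i))"
      by (simp add: inner_diff_left inner_diff_right sum_subtractf sum.distrib right_diff_distrib)
    have g2: "(\<Sum>i=1..m. inner xb (\<omega> i *\<^sub>R ubar i)) = inner xb (\<Sum>i=1..m. \<omega> i *\<^sub>R ubar i)" by (simp add: inner_sum_right)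
    have g3: "inner s (\<Sum>i=1..m. \<omega> i *\<^sub>R ubar i) = (\<Sum>i=1..m. \<omega> i * inner s (ubar i))" by (simp add: inner_sum_right)
    have g4: "inner (xb - s) (- (\<Sum>i=1..m. \<omega> i *\<^sub>R ubar i) - Dop s)
       = - inner xb (\<Sum>i=1..m. \<omega> i *\<^sub>R ubar i) - inner xb (Dop s) + inner s (\<Sum>i=1..m. \<omega> i *\<^sub>R ubar i) + inner s (Dop s)"
      by (simp add: inner_diff_left inner_diff_right inner_minus_right)
    show ?thesis unfolding g1 g4 g3 g2[symmetric] affl_def by simp
  qed
  ultimately show ?thesis by simp
qed

lemma cluster:
  assumes r: "strict_mono r" and wx: "weakly_converges (\<lambda>k. x (r k)) xb"
    and wu: "\<forall>i\<in>{1..m}. weakly_converges (\<lambda>k. u i (r k)) (ubar i)"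
  shows "sol xb ubar"
proof -
  define ubb where "ubb = (\<Sum>i=1..m. \<omega> i *\<^sub>R ubar i)"
  define p where "p = (\<lambda>i. resolvent (A i) (xb + \<omega> i *\<^sub>R ubar i))"
  define q where "q = (\<lambda>i. xb + \<omega> i *\<^sub>R ubar i - p i)"
  have pq: "\<forall>i\<in>{1..m}. q i \<in> A i (p i)"
    unfolding q_def p_def using resolvent_in maxA by blast
  have "0 \<le> (\<Sum>i=1..m. inner (xb - p i) (\<omega> i *\<^sub>R ubar i - q i)) + inner (xb - xb) (- (\<Sum>i=1..m. \<omega> i *\<^sub>R ubar i) - Dop xb)"
    by (rule cluster_ineq[OF r wx wu pq])
  also have "\<dots> = - (\<Sum>i=1..m. (norm (xb - p i))\<^sup>2)"
  proof -
    have "inner (xb - p i) (\<omega> i *\<^sub>R ubar i - q i) = - (norm (xb - p i))\<^sup>2" for i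
    proof -
      have "\<omega> i *\<^sub>R ubar i - q i = - (xb - p i)" unfolding q_def by simp
      then show ?thesis by (simp only: inner_minus_right power2_norm_eq_inner)
    qed
    then show ?thesis by (simp add: sum_negf)
  qed
  finally have "(\<Sum>i=1..m. (norm (xb - p i))\<^sup>2) \<le> 0" by simp
  then have "(\<Sum>i=1..m. (norm (xb - p i))\<^sup>2) = 0" by (simp add: order_antisym sum_nonneg)
  then have "\<forall>i\<in>{1..m}. (norm (xb - p i))\<^sup>2 = 0" by (subst (asm) sum_nonneg_eq_0_iff) auto
  then have peq: "\<forall>i\<in>{1..m}. p i = xb" by simp
  have A1: "\<forall>i\<in>{1..m}. \<omega> i *\<^sub>R ubar i \<in> A i xb"
  proof
    fix i assume i: "i \<in> {1..m}"
    have "q i = \<omega> i *\<^sub>R ubar i" unfolding q_def using peq i by simp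
    then show "\<omega> i *\<^sub>R ubar i \<in> A i xb" using pq peq i by metis
  qed
  have G: "inner (xb - s) (- ubb - Dop s) \<ge> 0" for s
  proof -
    have "0 \<le> (\<Sum>i=1..m. inner (xb - xb) (\<omega> i *\<^sub>R ubar i - \<omega> i *\<^sub>R ubar i)) + inner (xb - s) (- (\<Sum>i=1..m. \<omega> i *\<^sub>R ubar i) - Dop s)"
      by (rule cluster_ineq[OF r wx wu]) (use A1 in blast)
    then show ?thesis unfolding ubb_def by simp
  qed
  define w where "w = ubb + Dop xb"
  define c where "c = L + 1 / \<beta>"
  have cpos: "c > 0" unfolding c_def using Lpos bpos by (simp add: add_pos_pos)
  define t where "t = 1 / (2 * c)"
  have tpos: "t > 0" unfolding t_def using cpos by simp
  define d where "d = Dop xb - Dop (xb - t *\<^sub>R w)"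
  have dn: "norm d \<le> c * t * norm w"
    unfolding d_def c_def using D_lip[of xb "xb - t *\<^sub>R w"] tpos by (simp add: mult.assoc)
  have "0 \<le> inner (xb - (xb - t *\<^sub>R w)) (- ubb - Dop (xb - t *\<^sub>R w))" by (rule G)
  also have "\<dots> = t * (- (norm w)\<^sup>2 + inner w d)"
    unfolding d_def w_def by (simp add: inner_diff_right inner_add_right inner_minus_right power2_norm_eq_inner algebra_simps)
  finally have "0 \<le> - (norm w)\<^sup>2 + inner w d" using tpos by (simp add: zero_le_mult_iff)
  moreover have "inner w d \<le> norm w * (c * t * norm w)"
    using norm_cauchy_schwarz[of w d] dn by (meson mult_left_mono norm_ge_zero order_trans)
  moreover have "c * t = 1 / 2" unfolding t_def using cpos by simp
  ultimately have "(norm w)\<^sup>2 \<le> 0" by (simp add: power2_eq_square)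
  then have "w = 0" by simp
  then show ?thesis unfolding sol_def using A1 unfolding w_def ubb_def Dop_def by (simp add: add.assoc)
qed

end

lemma weak_compact_family:
  fixes F :: "nat \<Rightarrow> nat \<Rightarrow> 'a::{real_inner,complete_space}"
  assumes "finite I" "\<forall>i\<in>I. \<exists>M. \<forall>n. norm (F i n) \<le> M"
  shows "\<exists>r l. strict_mono r \<and> (\<forall>i\<in>I. weakly_converges (\<lambda>n. F i (r n)) (l i))"
  using assms
proof (induction I rule: finite_induct)
  case empty
  show ?case by (intro exI[of _ id]) (auto simp: strict_mono_def)
next
  case (insert j I)
  obtain r l where r: "strict_mono r" "\<forall>i\<in>I. weakly_converges (\<lambda>n. F i (r n)) (l i)"
    using insert by auto
  obtain M where M: "\<forall>n. norm (F j n) \<le> M" using insert.prems by auto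
  obtain r2 lj where r2: "strict_mono r2" "weakly_converges ((\<lambda>n. F j (r n)) \<circ> r2) lj"
    using weak_compact[of "\<lambda>n. F j (r n)" M] M by blast
  have "strict_mono (r \<circ> r2)" using r(1) r2(1) by (rule strict_mono_o)
  moreover have "\<forall>i\<in>insert j I. weakly_converges (\<lambda>n. F i ((r \<circ> r2) n)) ((l(j := lj)) i)"
  proof
    fix i assume "i \<in> insert j I"
    then show "weakly_converges (\<lambda>n. F i ((r \<circ> r2) n)) ((l(j := lj)) i)"
    proof
      assume "i = j" then show ?thesis using r2(2) by (simp add: o_def)
    next
      assume iI: "i \<in> I"
      then have "i \<noteq> j" using insert.hyps by auto
      moreover have "weakly_converges ((\<lambda>n. F i (r n)) \<circ> r2) (l i)" using r(2) iI r2(1) by (blast intro: weak_subseq)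
      ultimately show ?thesis by (simp add: o_def)
    qed
  qed
  ultimately show ?case by blast
qed

context setting begin

definition Eg :: "'a \<Rightarrow> (nat \<Rightarrow> 'a) \<Rightarrow> 'a \<Rightarrow> (nat \<Rightarrow> 'a) \<Rightarrow> real" where
  "Eg a b xs us = 1 / (2 * \<gamma>) * (norm (a - xs))\<^sup>2 + lam / 2 * (\<Sum>i=1..m. \<omega> i * (norm (b i - us i))\<^sup>2)
     - inner (a - xs) ((\<Sum>i=1..m. \<omega> i *\<^sub>R b i) - (\<Sum>i=1..m. \<omega> i *\<^sub>R us i))"

definition Lam :: "'a \<Rightarrow> (nat \<Rightarrow> 'a) \<Rightarrow> 'a \<Rightarrow> (nat \<Rightarrow> 'a) \<Rightarrow> real" where
  "Lam dx du a b = - (1 / \<gamma>) * inner a dx - lam * (\<Sum>i=1..m. \<omega> i * inner (b i) (du i))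
     + inner a (\<Sum>i=1..m. \<omega> i *\<^sub>R du i) + inner dx (\<Sum>i=1..m. \<omega> i *\<^sub>R b i)"

lemma Eg_diff:
  "Eg a b x1 u1 - Eg a b x2 u2 = Lam (x1 - x2) (\<lambda>i. u1 i - u2 i) a b
     + ((norm x1)\<^sup>2 - (norm x2)\<^sup>2) / (2 * \<gamma>) + lam / 2 * (\<Sum>i=1..m. \<omega> i * ((norm (u1 i))\<^sup>2 - (norm (u2 i))\<^sup>2))
     - inner x1 (\<Sum>i=1..m. \<omega> i *\<^sub>R u1 i) + inner x2 (\<Sum>i=1..m. \<omega> i *\<^sub>R u2 i)"
proof -
  have n1: "(norm (a - x1))\<^sup>2 - (norm (a - x2))\<^sup>2 = - 2 * inner a (x1 - x2) + (norm x1)\<^sup>2 - (norm x2)\<^sup>2"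
    by (simp add: nsq_diff inner_diff_right)
  have n2: "(\<Sum>i=1..m. \<omega> i * (norm (b i - u1 i))\<^sup>2) - (\<Sum>i=1..m. \<omega> i * (norm (b i - u2 i))\<^sup>2)
      = - 2 * (\<Sum>i=1..m. \<omega> i * inner (b i) (u1 i - u2 i)) + (\<Sum>i=1..m. \<omega> i * ((norm (u1 i))\<^sup>2 - (norm (u2 i))\<^sup>2))"
    by (simp add: sum_subtractf[symmetric] sum_distrib_left sum.distrib[symmetric] nsq_diff inner_diff_right algebra_simps)
  have n3: "(\<Sum>i=1..m. \<omega> i *\<^sub>R u1 i) - (\<Sum>i=1..m. \<omega> i *\<^sub>R u2 i) = (\<Sum>i=1..m. \<omega> i *\<^sub>R (u1 i - u2 i))"
    by (simp add: scaleR_diff_right sum_subtractf)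
  define bb where "bb = (\<Sum>i=1..m. \<omega> i *\<^sub>R b i)"
  define s1 where "s1 = (\<Sum>i=1..m. \<omega> i *\<^sub>R u1 i)"
  define s2 where "s2 = (\<Sum>i=1..m. \<omega> i *\<^sub>R u2 i)"
  have n4: "- inner (a - x1) (bb - s1) + inner (a - x2) (bb - s2) = inner a (s1 - s2) + inner (x1 - x2) bb - inner x1 s1 + inner x2 s2"
    by (simp add: inner_diff_left inner_diff_right)
  have "Eg a b x1 u1 - Eg a b x2 u2 = 1 / (2 * \<gamma>) * ((norm (a - x1))\<^sup>2 - (norm (a - x2))\<^sup>2)
      + lam / 2 * ((\<Sum>i=1..m. \<omega> i * (norm (b i - u1 i))\<^sup>2) - (\<Sum>i=1..m. \<omega> i * (norm (b i - u2 i))\<^sup>2))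
      + (- inner (a - x1) (bb - s1) + inner (a - x2) (bb - s2))"
    unfolding Eg_def bb_def s1_def s2_def by (simp add: algebra_simps)
  also have "\<dots> = Lam (x1 - x2) (\<lambda>i. u1 i - u2 i) a b
     + ((norm x1)\<^sup>2 - (norm x2)\<^sup>2) / (2 * \<gamma>) + lam / 2 * (\<Sum>i=1..m. \<omega> i * ((norm (u1 i))\<^sup>2 - (norm (u2 i))\<^sup>2))
     - inner x1 s1 + inner x2 s2"
    unfolding n1 n2 n4 Lam_def n3[folded s1_def s2_def] bb_def[symmetric]
    by (simp add: algebra_simps diff_divide_distrib)
  finally show ?thesis unfolding s1_def s2_def .
qed

lemma Lam_diff: "Lam dx du a1 b1 - Lam dx du a2 b2 = Lam dx du (a1 - a2) (\<lambda>i. b1 i - b2 i)"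
  unfolding Lam_def
  by (simp add: inner_diff_left inner_diff_right scaleR_diff_right sum_subtractf algebra_simps sum_distrib_left[symmetric] sum.distrib[symmetric])

lemma Lam_self: "Lam dx du dx du \<le> - 2 * \<kappa> * (norm dx)\<^sup>2"
proof -
  have J: "(norm (\<Sum>i=1..m. \<omega> i *\<^sub>R du i))\<^sup>2 \<le> (\<Sum>i=1..m. \<omega> i * (norm (du i))\<^sup>2)" by (rule jensen_m)
  have E: "1 / (2 * \<gamma>) * (norm dx)\<^sup>2 + lam / 2 * (\<Sum>i=1..m. \<omega> i * (norm (du i))\<^sup>2) - inner dx (\<Sum>i=1..m. \<omega> i *\<^sub>R du i)
     \<ge> (1 / (2 * \<gamma>) - 1 / (2 * lam) - 1 / (4 * \<beta>)) * (norm dx)\<^sup>2 + lam\<^sup>2 / (2 * (2 * \<beta> + lam)) * (\<Sum>i=1..m. \<omega> i * (norm (du i))\<^sup>2)"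
    by (rule E_lower[OF J lampos bpos])
  have S: "(\<Sum>i=1..m. \<omega> i * (norm (du i))\<^sup>2) \<ge> 0" using om_nonneg by (intro sum_nonneg) auto
  have k: "(1 / (2 * \<gamma>) - 1 / (2 * lam) - 1 / (4 * \<beta>)) * (norm dx)\<^sup>2 \<ge> \<kappa> * (norm dx)\<^sup>2"
  proof (rule mult_right_mono)
    have "1 / (4 * \<beta>) \<le> 1 / (2 * \<beta>)" using bpos by (simp add: divide_simps)
    then show "\<kappa> \<le> 1 / (2 * \<gamma>) - 1 / (2 * lam) - 1 / (4 * \<beta>)"
      unfolding \<kappa>_def using Lpos by linarith
  qed simp
  have L: "Lam dx du dx du = - 2 * (1 / (2 * \<gamma>) * (norm dx)\<^sup>2 + lam / 2 * (\<Sum>i=1..m. \<omega> i * (norm (du i))\<^sup>2) - inner dx (\<Sum>i=1..m. \<omega> i *\<^sub>R du i))"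
    unfolding Lam_def by (simp add: power2_norm_eq_inner algebra_simps sum_distrib_left sum_negf)
  have "lam\<^sup>2 / (2 * (2 * \<beta> + lam)) * (\<Sum>i=1..m. \<omega> i * (norm (du i))\<^sup>2) \<ge> 0"
    using S lampos bpos by simp
  then show ?thesis using L E k by argo
qed

lemma Lam_lim:
  assumes wx: "weakly_converges (\<lambda>k. x (r k)) a" and wu: "\<forall>i\<in>{1..m}. weakly_converges (\<lambda>k. u i (r k)) (b i)"
  shows "(\<lambda>k. Lam dx du (x (r k)) (\<lambda>i. u i (r k))) \<longlonglongrightarrow> Lam dx du a b"
proof -
  have s1: "inner dx (\<Sum>i=1..m. \<omega> i *\<^sub>R c i) = (\<Sum>i=1..m. \<omega> i * inner (c i) dx)" for c
    by (simp add: inner_sum_right inner_commute)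
  show ?thesis unfolding Lam_def s1
    by (intro tendsto_add tendsto_diff tendsto_mult tendsto_const tendsto_sum weak_inner[OF wx] weak_inner[of "\<lambda>k. u _ (r k)"])
      (use wu in auto)
qed

lemma Bdiff0: "(\<lambda>n. B (x n) - B (xp n)) \<longlonglongrightarrow> 0"
proof -
  have "(\<lambda>n. L * norm (x n - xp n)) \<longlonglongrightarrow> L * 0"
    using xxp0 by (intro tendsto_mult tendsto_const) (simp add: tendsto_norm_zero_iff)
  then have up: "(\<lambda>n. L * norm (x n - xp n)) \<longlonglongrightarrow> 0" by simp
  have le: "norm (B (x n) - B (xp n)) \<le> L * norm (x n - xp n)" for n using lipB unfolding lipschitz_op_def by blast
  have "(\<lambda>n. norm (B (x n) - B (xp n))) \<longlonglongrightarrow> 0"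
    by (rule tendsto_sandwich[of "\<lambda>n. 0" _ _ "\<lambda>n. L * norm (x n - xp n)", OF _ _ tendsto_const up])
      (simp_all add: le)
  then show ?thesis by (simp add: tendsto_norm_zero_iff)
qed

lemma E_conv:
  assumes s: "sol xs us"
  shows "\<exists>l. (\<lambda>n. Eg (x n) (\<lambda>i. u i n) xs us) \<longlonglongrightarrow> l"
proof -
  obtain l where l: "Wn xs us \<longlonglongrightarrow> l" using W_conv[OF s] by blast
  obtain Mx where Mx: "\<forall>n. norm (x n) \<le> Mx" using x_bdd by blast
  have e: "Eg (x n) (\<lambda>i. u i n) xs us = Wn xs us n + inner (B (x n) - B (xp n)) (x n - xs) - L / 2 * (norm (x n - xp n))\<^sup>2" for n
    unfolding Eg_def Wn_def Wf_def Uu_def ub_def ubs_def by simp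
  have i0: "(\<lambda>n. inner (B (x n) - B (xp n)) (x n - xs)) \<longlonglongrightarrow> 0"
  proof (rule inner_null[OF Bdiff0])
    fix n show "norm (x n - xs) \<le> Mx + norm xs" using Mx by (meson add_mono norm_triangle_ineq4 order_trans order_refl)
  qed
  have n0: "(\<lambda>n. L / 2 * (norm (x n - xp n))\<^sup>2) \<longlonglongrightarrow> L / 2 * 0\<^sup>2"
    using xxp0 by (intro tendsto_mult tendsto_const tendsto_power) (simp add: tendsto_norm_zero_iff)
  have "(\<lambda>n. Wn xs us n + inner (B (x n) - B (xp n)) (x n - xs) - L / 2 * (norm (x n - xp n))\<^sup>2) \<longlonglongrightarrow> l + 0 - L / 2 * 0\<^sup>2"
    by (rule tendsto_diff[OF tendsto_add[OF l i0] n0])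
  then show ?thesis unfolding e by blast
qed

lemma opial:
  assumes r1: "strict_mono r1" and wx1: "weakly_converges (\<lambda>k. x (r1 k)) x1"
    and wu1: "\<forall>i\<in>{1..m}. weakly_converges (\<lambda>k. u i (r1 k)) (u1 i)"
    and r2: "strict_mono r2" and wx2: "weakly_converges (\<lambda>k. x (r2 k)) x2"
    and wu2: "\<forall>i\<in>{1..m}. weakly_converges (\<lambda>k. u i (r2 k)) (u2 i)"
  shows "x1 = x2"
proof -
  have s1: "sol x1 u1" by (rule cluster[OF r1 wx1 wu1])
  have s2: "sol x2 u2" by (rule cluster[OF r2 wx2 wu2])
  obtain l1 where l1: "(\<lambda>n. Eg (x n) (\<lambda>i. u i n) x1 u1) \<longlonglongrightarrow> l1" using E_conv[OF s1] by blast
  obtain l2 where l2: "(\<lambda>n. Eg (x n) (\<lambda>i. u i n) x2 u2) \<longlonglongrightarrow> l2" using E_conv[OF s2] by blast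
  define dx where "dx = x1 - x2"
  define du where "du = (\<lambda>i. u1 i - u2 i)"
  define K where "K = ((norm x1)\<^sup>2 - (norm x2)\<^sup>2) / (2 * \<gamma>) + lam / 2 * (\<Sum>i=1..m. \<omega> i * ((norm (u1 i))\<^sup>2 - (norm (u2 i))\<^sup>2))
     - inner x1 (\<Sum>i=1..m. \<omega> i *\<^sub>R u1 i) + inner x2 (\<Sum>i=1..m. \<omega> i *\<^sub>R u2 i)"
  define \<Lambda> where "\<Lambda> = (\<lambda>n. Lam dx du (x n) (\<lambda>i. u i n))"
  have eq: "\<Lambda> = (\<lambda>n. Eg (x n) (\<lambda>i. u i n) x1 u1 - Eg (x n) (\<lambda>i. u i n) x2 u2 - K)"
    unfolding \<Lambda>_def K_def dx_def du_def Eg_diff by simp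
  have Ll: "\<Lambda> \<longlonglongrightarrow> l1 - l2 - K" unfolding eq by (intro tendsto_diff l1 l2 tendsto_const)
  have c1: "(\<lambda>k. \<Lambda> (r1 k)) \<longlonglongrightarrow> Lam dx du x1 u1" unfolding \<Lambda>_def by (rule Lam_lim[OF wx1 wu1])
  have c1': "(\<lambda>k. \<Lambda> (r1 k)) \<longlonglongrightarrow> l1 - l2 - K" using LIMSEQ_subseq_LIMSEQ[OF Ll r1] by (simp add: o_def)
  have c2: "(\<lambda>k. \<Lambda> (r2 k)) \<longlonglongrightarrow> Lam dx du x2 u2" unfolding \<Lambda>_def by (rule Lam_lim[OF wx2 wu2])
  have c2': "(\<lambda>k. \<Lambda> (r2 k)) \<longlonglongrightarrow> l1 - l2 - K" using LIMSEQ_subseq_LIMSEQ[OF Ll r2] by (simp add: o_def)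
  have "Lam dx du x1 u1 = Lam dx du x2 u2" using LIMSEQ_unique[OF c1 c1'] LIMSEQ_unique[OF c2 c2'] by simp
  then have "Lam dx du dx du = 0" using Lam_diff[of dx du x1 u1 x2 u2] unfolding dx_def du_def by simp
  then have "2 * \<kappa> * (norm dx)\<^sup>2 \<le> 0" using Lam_self[of dx du] by simp
  then have "(norm dx)\<^sup>2 \<le> 0" using kappa_pos by (simp add: mult_le_0_iff)
  then show ?thesis unfolding dx_def by simp
qed

end

context setting begin

lemma main: "\<exists>z. weakly_converges x z \<and> is_zero_of m A B C z"
proof -
  define F where "F = (\<lambda>i n. if i = 0 then x n else u i n)"
  have bF: "\<exists>M. \<forall>n. norm (F i n) \<le> M" if "i \<in> {0..m}" for i
  proof (cases "i = 0")
    case True then show ?thesis unfolding F_def using x_bdd by simp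
  next
    case False then have "i \<in> {1..m}" using that by auto
    then show ?thesis unfolding F_def using u_bdd False by simp
  qed
  have exsub: "\<exists>r2 l. strict_mono r2 \<and> (\<forall>i\<in>{0..m}. weakly_converges (\<lambda>n. F i (r (r2 n))) (l i))" for r :: "nat \<Rightarrow> nat"
  proof -
    have "\<forall>i\<in>{0..m}. \<exists>M. \<forall>n. norm (F i (r n)) \<le> M" using bF by blast
    then show ?thesis using weak_compact_family[of "{0..m}" "\<lambda>i n. F i (r n)"] by simp
  qed
  have split: "weakly_converges (\<lambda>k. x (r k)) (l 0) \<and> (\<forall>i\<in>{1..m}. weakly_converges (\<lambda>k. u i (r k)) (l i))"
    if "\<forall>i\<in>{0..m}. weakly_converges (\<lambda>n. F i (r n)) (l i)" for r l
  proof -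
    have "weakly_converges (\<lambda>n. F 0 (r n)) (l 0)" using that by auto
    moreover have "weakly_converges (\<lambda>n. F i (r n)) (l i)" if "i \<in> {1..m}" for i
      using \<open>\<forall>i\<in>{0..m}. _\<close> that by auto
    ultimately show ?thesis unfolding F_def by auto
  qed
  obtain r0 l0 where r0: "strict_mono r0" and l0: "\<forall>i\<in>{0..m}. weakly_converges (\<lambda>n. F i (id (r0 n))) (l0 i)"
    using exsub[of id] by blast
  have wx0: "weakly_converges (\<lambda>k. x (r0 k)) (l0 0)" and wu0: "\<forall>i\<in>{1..m}. weakly_converges (\<lambda>k. u i (r0 k)) (l0 i)"
    using split[of r0 l0] l0 by auto
  have "sol (l0 0) l0" by (rule cluster[OF r0 wx0 wu0])
  then have zero: "is_zero_of m A B C (l0 0)" by (rule sol_zero)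
  have "weakly_converges x (l0 0)"
    unfolding weakly_converges_def
  proof
    fix w
    show "(\<lambda>n. inner (x n) w) \<longlonglongrightarrow> inner (l0 0) w"
    proof (rule ccontr)
      assume nt: "\<not> ?thesis"
      then obtain \<epsilon> :: real where ep: "\<epsilon> > 0" "\<not> eventually (\<lambda>n. dist (inner (x n) w) (inner (l0 0) w) < \<epsilon>) sequentially"
        unfolding tendsto_iff by blast
      obtain r' :: "nat \<Rightarrow> nat" where r': "strict_mono r'" "\<forall>n. \<not> dist (inner (x (r' n)) w) (inner (l0 0) w) < \<epsilon>"
        using not_eventually_sequentiallyD[OF ep(2)] by auto
      obtain r2 l2 where r2: "strict_mono r2" and l2: "\<forall>i\<in>{0..m}. weakly_converges (\<lambda>n. F i (r' (r2 n))) (l2 i)"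
        using exsub[of r'] by blast
      have sm: "strict_mono (\<lambda>n. r' (r2 n))" using strict_mono_o[OF r'(1) r2] by (simp add: o_def)
      have wx2: "weakly_converges (\<lambda>k. x (r' (r2 k))) (l2 0)" and wu2: "\<forall>i\<in>{1..m}. weakly_converges (\<lambda>k. u i (r' (r2 k))) (l2 i)"
        using split[of "\<lambda>n. r' (r2 n)" l2] l2 by auto
      have "l0 0 = l2 0" by (rule opial[OF r0 wx0 wu0 sm wx2 wu2])
      then have "(\<lambda>k. inner (x (r' (r2 k))) w) \<longlonglongrightarrow> inner (l0 0) w" using weak_inner[OF wx2] by simp
      then have "eventually (\<lambda>k. dist (inner (x (r' (r2 k))) w) (inner (l0 0) w) < \<epsilon>) sequentially"
        using ep(1) tendstoD by blast
      then obtain k where "dist (inner (x (r' (r2 k))) w) (inner (l0 0) w) < \<epsilon>"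
        by (meson eventually_sequentially order_refl)
      then show False using r'(2) by blast
    qed
  qed
  then show ?thesis using zero by blast
qed

end

theorem theorem4p3:
  fixes A :: "nat \<Rightarrow> 'a::{real_inner,complete_space} \<Rightarrow> 'a set"
    and B C :: "'a \<Rightarrow> 'a"
    and m :: nat and L \<beta> lam \<gamma> :: real and \<omega> :: "nat \<Rightarrow> real"
    and x :: "nat \<Rightarrow> 'a" and x_m1 :: 'a
    and u y :: "nat \<Rightarrow> nat \<Rightarrow> 'a"
  assumes "m \<ge> 1"
    and "\<forall>i\<in>{1..m}. maximally_monotone (A i)"
    and "monotone_single B" and "L > 0" and "lipschitz_op L B"
    and "\<beta> > 0" and "cocoercive \<beta> C"
    and "\<exists>z. is_zero_of m A B C z"
    and "\<forall>i\<in>{1..m}. 0 < \<omega> i \<and> \<omega> i \<le> 1" and "(\<Sum>i=1..m. \<omega> i) = 1"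
    and "lam > 0" and "\<gamma> > 0" and "\<gamma> < lam * \<beta> / (\<beta> + lam * (2 * \<beta> * L + 1))"
    and "\<forall>n. x (Suc n) = (\<Sum>j=1..m. \<omega> j *\<^sub>R
            (x n - \<gamma> *\<^sub>R u j n
                 - \<gamma> *\<^sub>R (2 *\<^sub>R B (x n) - B (if n = 0 then x_m1 else x (n - 1)))
                 - \<gamma> *\<^sub>R C (x n)))"
    and "\<forall>n. \<forall>i\<in>{1..m}. y i (Suc n) =
            resolvent (scale_op (lam / \<omega> i) (A i)) (2 *\<^sub>R x (Suc n) - x n + lam *\<^sub>R u i n)"
    and "\<forall>n. \<forall>i\<in>{1..m}. u i (Suc n) =
            u i n + (1 / lam) *\<^sub>R (2 *\<^sub>R x (Suc n) - x n - y i (Suc n))"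
  shows "\<exists>z. weakly_converges x z \<and> is_zero_of m A B C z"
proof -
  interpret setting A B C m L \<beta> lam \<gamma> \<omega> x x_m1 u y
    using assms by (unfold_locales) auto
  show ?thesis by (rule main)
qed

end
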